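(* Let $n\ge2$, $\alpha=n-2$ and $l,m\in\mathbb Z_{\ge0}$. Then $$h_n\bigl(R^{(\alpha)}_{l,m}(z_n,w_n;q^2)^*\,R^{(\alpha)}_{l,m}(z_n,w_n;q^2)\bigr)=c^{(\alpha)}_{l,m}:=\frac{(1-q^{2(\alpha+1)})q^{2m(\alpha+1)}}{1-q^{2(\alpha+l+m+1)}}\cdot\frac{(q^2;q^2)_l(q^2;q^2)_m}{(q^{2(\alpha+1)};q^2)_l(q^{2(\alpha+1)};q^2)_m}.$$
   Context: Fix $0<q<1$, $n\ge2$. $\mathcal Z_n$ is the unital complex $*$-algebra generated by $z_1,\dots,z_n,w_1,\dots,w_n$ subject to $z_iz_j=qz_jz_i$ $(i<j)$, $w_jw_i=qw_iw_j$ $(i<j)$, $w_iz_j=qz_jw_i$ $(i\ne j)$, $w_iz_i=z_iw_i+(1-q^2)\sum_{k<i}z_kw_k$, with involution $z_i^*=w_i$. $z^\lambda w^\mu=z_1^{\lambda_1}\cdots z_n^{\lambda_n}w_n^{\mu_n}\cdots w_1^{\mu_1}$, $|\lambda|=\sum\lambda_i$, $Q_i=\sum_{k=1}^iz_kw_k$; $Q_n$ is central and $\widetilde{\mathcal Z}_n=\mathcal Z_n/(Q_n-1)$. $(a;p)_k=\prod_{j=0}^{k-1}(1-ap^j)$. $h_n$ is the linear functional on $\widetilde{\mathcal Z}_n$ with $h_n(z^\lambda w^\mu)=\delta_{\lambda\mu}q^{-2((n-1)\lambda_1+(n-2)\lambda_2+\cdots+\lambda_{n-1})}\frac{(q^{-2};q^{-2})_{\lambda_1}\cdots(q^{-2};q^{-2})_{\lambda_n}(q^{-2};q^{-2})_{n-1}}{(q^{-2};q^{-2})_{|\lambda|+n-1}}$.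 Little $q$-Jacobi: $P^{(\alpha,\beta)}_m(x;p)=\sum_{k=0}^m\frac{(p^{-m};p)_k(p^{\alpha+\beta+m+1};p)_k}{(p^{\alpha+1};p)_k(p;p)_k}(px)^k$. $q$-disk polynomials in $\widetilde{\mathcal Z}_n$: $R^{(\alpha)}_{l,m}(z_n,w_n;q^2)=z_n^{l-m}P^{(\alpha,l-m)}_m(Q_{n-1};q^2)$ if $l\ge m$ and $=P^{(\alpha,m-l)}_l(Q_{n-1};q^2)w_n^{m-l}$ if $l\le m$. *)

theory Defs
  imports Complex_Main "HOL-Library.Function_Algebras"
begin

text \<open>Noncommutative polynomials in the letters z_i = (False,i), w_i = (True,i):
  an element is a coefficient function on words (lists of letters).
  Addition/subtraction are pointwise (Function_Algebras); multiplication is concatenation-convolution.\<close>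

type_synonym ncp = "(bool \<times> nat) list \<Rightarrow> complex"

definition ncmul :: "ncp \<Rightarrow> ncp \<Rightarrow> ncp" where
  "ncmul p r = (\<lambda>u. \<Sum>k\<le>length u. p (take k u) * r (drop k u))"

definition ncone :: ncp where
  "ncone = (\<lambda>u. if u = [] then 1 else 0)"

definition ncword :: "(bool \<times> nat) list \<Rightarrow> ncp" where
  "ncword v = (\<lambda>u. if u = v then 1 else 0)"

definition ncsmult :: "complex \<Rightarrow> ncp \<Rightarrow> ncp" where
  "ncsmult c p = (\<lambda>u. c * p u)"

definition ncstar :: "ncp \<Rightarrow> ncp" where
  "ncstar p = (\<lambda>u. cnj (p (rev (map (\<lambda>(b, i). (\<not> b, i)) u))))"

fun ncpow :: "ncp \<Rightarrow> nat \<Rightarrow> ncp" where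
  "ncpow x 0 = ncone"
| "ncpow x (Suc k) = ncmul x (ncpow x k)"

definition zg :: "nat \<Rightarrow> ncp" where "zg i = ncword [(False, i)]"
definition wg :: "nat \<Rightarrow> ncp" where "wg i = ncword [(True, i)]"

definition Qsum :: "nat \<Rightarrow> ncp" where
  "Qsum i = (\<Sum>k\<in>{1..i}. ncmul (zg k) (wg k))"

definition ncpoly :: "nat \<Rightarrow> ncp \<Rightarrow> bool" where
  "ncpoly n p \<longleftrightarrow> finite {u. p u \<noteq> 0} \<and> (\<forall>u. p u \<noteq> 0 \<longrightarrow> (\<forall>x\<in>set u. snd x \<in> {1..n}))"

text \<open>Two-sided ideal of the free algebra generated by the defining relations of Z_n
  together with Q_n - 1; the quotient is \<open>Z_n/(Q_n - 1)\<close>.\<close>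
inductive_set Zrel_ideal :: "real \<Rightarrow> nat \<Rightarrow> ncp set" for q :: real and n :: nat where
  zz: "1 \<le> i \<Longrightarrow> i < j \<Longrightarrow> j \<le> n \<Longrightarrow>
        ncmul (zg i) (zg j) - ncsmult (of_real q) (ncmul (zg j) (zg i)) \<in> Zrel_ideal q n"
| ww: "1 \<le> i \<Longrightarrow> i < j \<Longrightarrow> j \<le> n \<Longrightarrow>
        ncmul (wg j) (wg i) - ncsmult (of_real q) (ncmul (wg i) (wg j)) \<in> Zrel_ideal q n"
| wz: "1 \<le> i \<Longrightarrow> i \<le> n \<Longrightarrow> 1 \<le> j \<Longrightarrow> j \<le> n \<Longrightarrow> i \<noteq> j \<Longrightarrow>
        ncmul (wg i) (zg j) - ncsmult (of_real q) (ncmul (zg j) (wg i)) \<in> Zrel_ideal q n"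
| wzi: "1 \<le> i \<Longrightarrow> i \<le> n \<Longrightarrow>
        ncmul (wg i) (zg i) - ncmul (zg i) (wg i) - ncsmult (of_real (1 - q^2)) (Qsum (i - 1))
          \<in> Zrel_ideal q n"
| Qn: "Qsum n - ncone \<in> Zrel_ideal q n"
| add: "a \<in> Zrel_ideal q n \<Longrightarrow> b \<in> Zrel_ideal q n \<Longrightarrow> a + b \<in> Zrel_ideal q n"
| smult: "a \<in> Zrel_ideal q n \<Longrightarrow> ncsmult c a \<in> Zrel_ideal q n"
| lmul: "a \<in> Zrel_ideal q n \<Longrightarrow> 1 \<le> i \<Longrightarrow> i \<le> n \<Longrightarrow> ncmul (ncword [(b, i)]) a \<in> Zrel_ideal q n"
| rmul: "a \<in> Zrel_ideal q n \<Longrightarrow> 1 \<le> i \<Longrightarrow> i \<le> n \<Longrightarrow> ncmul a (ncword [(b, i)]) \<in> Zrel_ideal q n"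

definition qpoch :: "real \<Rightarrow> real \<Rightarrow> nat \<Rightarrow> real" where
  "qpoch a p k = (\<Prod>j<k. 1 - a * p ^ j)"

text \<open>The word of z^lam w^mu = z_1^{lam_1}...z_n^{lam_n} w_n^{mu_n}...w_1^{mu_1}\<close>
definition zw_word :: "nat \<Rightarrow> (nat \<Rightarrow> nat) \<Rightarrow> (nat \<Rightarrow> nat) \<Rightarrow> (bool \<times> nat) list" where
  "zw_word n lam mu =
     concat (map (\<lambda>i. replicate (lam i) (False, i)) [1..<n+1]) @
     concat (map (\<lambda>i. replicate (mu i) (True, i)) (rev [1..<n+1]))"

text \<open>Value of h_n on z^lam w^lam.\<close>
definition hval :: "real \<Rightarrow> nat \<Rightarrow> (nat \<Rightarrow> nat) \<Rightarrow> real" where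
  "hval q n lam =
     (1 / q^2) ^ (\<Sum>i\<in>{1..n-1}. (n - i) * lam i) *
     ((\<Prod>i\<in>{1..n}. qpoch (1 / q^2) (1 / q^2) (lam i)) * qpoch (1 / q^2) (1 / q^2) (n - 1))
     / qpoch (1 / q^2) (1 / q^2) ((\<Sum>i\<in>{1..n}. lam i) + n - 1)"

definition is_hn :: "real \<Rightarrow> nat \<Rightarrow> (ncp \<Rightarrow> complex) \<Rightarrow> bool" where
  "is_hn q n h \<longleftrightarrow>
     (\<forall>p r. ncpoly n p \<longrightarrow> ncpoly n r \<longrightarrow> h (p + r) = h p + h r) \<and>
     (\<forall>c p. ncpoly n p \<longrightarrow> h (ncsmult c p) = c * h p) \<and>
     (\<forall>a\<in>Zrel_ideal q n. h a = 0) \<and>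
     (\<forall>lam mu. h (ncword (zw_word n lam mu)) =
        (if (\<forall>i\<in>{1..n}. lam i = mu i) then of_real (hval q n lam) else 0))"

definition lqj_coeff :: "nat \<Rightarrow> nat \<Rightarrow> nat \<Rightarrow> real \<Rightarrow> nat \<Rightarrow> real" where
  "lqj_coeff al be m p k =
     qpoch (1 / p ^ m) p k * qpoch (p ^ (al + be + m + 1)) p k
     / (qpoch (p ^ (al + 1)) p k * qpoch p p k)"

definition lqJ :: "nat \<Rightarrow> nat \<Rightarrow> nat \<Rightarrow> real \<Rightarrow> ncp \<Rightarrow> ncp" where
  "lqJ al be m p x = (\<Sum>k\<le>m. ncsmult (of_real (lqj_coeff al be m p k * p ^ k)) (ncpow x k))"

definition qdisk :: "nat \<Rightarrow> real \<Rightarrow> nat \<Rightarrow> nat \<Rightarrow> ncp" where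
  "qdisk n q l m =
     (if m \<le> l then ncmul (ncpow (zg n) (l - m)) (lqJ (n - 2) (l - m) m (q^2) (Qsum (n - 1)))
      else ncmul (lqJ (n - 2) (m - l) l (q^2) (Qsum (n - 1))) (ncpow (wg n) (m - l)))"

definition cval :: "nat \<Rightarrow> real \<Rightarrow> nat \<Rightarrow> nat \<Rightarrow> real" where
  "cval al q l m =
     (1 - q ^ (2 * (al + 1))) * q ^ (2 * m * (al + 1)) / (1 - q ^ (2 * (al + l + m + 1))) *
     (qpoch (q^2) (q^2) l * qpoch (q^2) (q^2) m
      / (qpoch (q ^ (2 * (al + 1))) (q^2) l * qpoch (q ^ (2 * (al + 1))) (q^2) m))"

end

theory Submission
  imports Defs "HOL-Computational_Algebra.Polynomial"
begin

lemma additive_sum: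
  fixes g :: "'b::comm_monoid_add \<Rightarrow> 'c::comm_monoid_add"
  assumes "g 0 = 0" and "\<And>a b. g (a + b) = g a + g b"
  shows "g (\<Sum>i\<in>S. f i) = (\<Sum>i\<in>S. g (f i))"
proof (induction S rule: infinite_finite_induct)
  case (infinite A) then show ?case using assms(1) by simp
next
  case empty then show ?case using assms(1) by simp
next
  case (insert x F) then show ?case using assms(2) by simp
qed

lemma splits_eq: "{(x,y). x @ y = u} = (\<lambda>k. (take k u, drop k u)) ` {..length u}"
proof (rule set_eqI, rule iffI)
  fix xy assume "xy \<in> {(x,y). x @ y = u}"
  then obtain x y where xy: "xy = (x,y)" "x @ y = u" by auto
  then show "xy \<in> (\<lambda>k. (take k u, drop k u)) ` {..length u}"
    by (intro image_eqI[where x="length x"]) auto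
qed auto

lemma finite_splits[simp]: "finite {(x,y). x @ y = u}"
  unfolding splits_eq by simp

lemma ncmul_alt: "ncmul p r u = (\<Sum>(x,y)\<in>{(x,y). x @ y = u}. p x * r y)"
  unfolding ncmul_def
  by (rule sum.reindex_bij_witness[where i="\<lambda>(x,y). length x" and j="\<lambda>k. (take k u, drop k u)"])
     auto

definition spl :: "(bool \<times> nat) list \<Rightarrow> ((bool \<times> nat) list \<times> (bool \<times> nat) list) set" where
  "spl u = {(x,y). x @ y = u}"

lemma finite_spl[simp]: "finite (spl u)" by (simp add: spl_def)

lemma ncmul_spl: "ncmul p r u = (\<Sum>xy\<in>spl u. p (fst xy) * r (snd xy))"
  by (simp add: ncmul_alt spl_def case_prod_unfold)

lemma ncmul_assoc: "ncmul (ncmul p r) s = ncmul p (ncmul r s)"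
proof
  fix u
  have "ncmul (ncmul p r) s u = (\<Sum>az\<in>spl u. (\<Sum>xy\<in>spl (fst az). p (fst xy) * r (snd xy) * s (snd az)))"
    by (simp add: ncmul_spl sum_distrib_right)
  also have "\<dots> = (\<Sum>w\<in>Sigma (spl u) (\<lambda>az. spl (fst az)). p (fst (snd w)) * r (snd (snd w)) * s (snd (fst w)))"
    by (subst sum.Sigma) (auto simp: case_prod_unfold)
  also have "\<dots> = (\<Sum>w\<in>Sigma (spl u) (\<lambda>xb. spl (snd xb)). p (fst (fst w)) * r (fst (snd w)) * s (snd (snd w)))"
    by (rule sum.reindex_bij_witness[where i="\<lambda>((x,b),(y,z)). ((x@y, z),(x,y))"
          and j="\<lambda>((a,z),(x,y)). ((x, y@z),(y,z))"]) (auto simp: spl_def)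
  also have "\<dots> = (\<Sum>xb\<in>spl u. (\<Sum>yz\<in>spl (snd xb). p (fst xb) * (r (fst yz) * s (snd yz))))"
    by (subst sum.Sigma) (auto simp: case_prod_unfold mult.assoc)
  also have "\<dots> = ncmul p (ncmul r s) u"
    by (simp add: ncmul_spl sum_distrib_left)
  finally show "ncmul (ncmul p r) s u = ncmul p (ncmul r s) u" .
qed

lemma ncmul_add_left: "ncmul (a + b) c = ncmul a c + ncmul b c"
  by (rule ext) (simp add: ncmul_def distrib_right sum.distrib)
lemma ncmul_add_right: "ncmul c (a + b) = ncmul c a + ncmul c b"
  by (rule ext) (simp add: ncmul_def distrib_left sum.distrib)
lemma ncmul_diff_left: "ncmul (a - b) c = ncmul a c - ncmul b c"
  by (rule ext) (simp add: ncmul_def left_diff_distrib sum_subtractf)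
lemma ncmul_diff_right: "ncmul c (a - b) = ncmul c a - ncmul c b"
  by (rule ext) (simp add: ncmul_def right_diff_distrib sum_subtractf)
lemma ncmul_smult_left: "ncmul (ncsmult k a) c = ncsmult k (ncmul a c)"
  by (rule ext) (simp add: ncmul_def ncsmult_def sum_distrib_left mult.assoc)
lemma ncmul_smult_right: "ncmul c (ncsmult k a) = ncsmult k (ncmul c a)"
  by (rule ext) (simp add: ncmul_def ncsmult_def sum_distrib_left mult.left_commute)
lemma ncmul_zero_left[simp]: "ncmul 0 c = 0"
  by (rule ext) (simp add: ncmul_def)
lemma ncmul_zero_right[simp]: "ncmul c 0 = 0"
  by (rule ext) (simp add: ncmul_def)
lemma ncmul_sum_left: "ncmul (\<Sum>i\<in>S. f i) c = (\<Sum>i\<in>S. ncmul (f i) c)"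
  by (rule additive_sum[where g="\<lambda>x. ncmul x c"]) (simp_all add: ncmul_add_left)
lemma ncmul_sum_right: "ncmul c (\<Sum>i\<in>S. f i) = (\<Sum>i\<in>S. ncmul c (f i))"
  by (rule additive_sum[where g="\<lambda>x. ncmul c x"]) (simp_all add: ncmul_add_right)

lemma ncmul_one_left[simp]: "ncmul ncone c = c"
proof
  fix u
  have "ncmul ncone c u = (\<Sum>k\<le>length u. if k = 0 then c u else 0)"
    unfolding ncmul_def ncone_def by (rule sum.cong) auto
  then show "ncmul ncone c u = c u" by simp
qed
lemma ncmul_one_right[simp]: "ncmul c ncone = c"
proof
  fix u
  have "ncmul c ncone u = (\<Sum>k\<le>length u. if k = length u then c u else 0)"
    unfolding ncmul_def ncone_def by (rule sum.cong) auto
  then show "ncmul c ncone u = c u" by simp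
qed

lemma ncsmult_add: "ncsmult k (a + b) = ncsmult k a + ncsmult k b"
  by (rule ext) (simp add: ncsmult_def distrib_left)
lemma ncsmult_diff: "ncsmult k (a - b) = ncsmult k a - ncsmult k b"
  by (rule ext) (simp add: ncsmult_def right_diff_distrib)
lemma ncsmult_smult: "ncsmult k (ncsmult j a) = ncsmult (k*j) a"
  by (rule ext) (simp add: ncsmult_def)
lemma ncsmult_one[simp]: "ncsmult 1 a = a"
  by (rule ext) (simp add: ncsmult_def)
lemma ncsmult_zero[simp]: "ncsmult 0 a = 0"
  by (rule ext) (simp add: ncsmult_def)
lemma ncsmult_zero2[simp]: "ncsmult k 0 = 0"
  by (rule ext) (simp add: ncsmult_def)
lemma ncsmult_sum: "ncsmult k (\<Sum>i\<in>S. f i) = (\<Sum>i\<in>S. ncsmult k (f i))"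
  by (rule additive_sum[where g="ncsmult k"]) (simp_all add: ncsmult_add)
lemma ncsmult_addk: "ncsmult (k + j) a = ncsmult k a + ncsmult j a"
  by (rule ext) (simp add: ncsmult_def distrib_right)
lemma ncsmult_diffk: "ncsmult (k - j) a = ncsmult k a - ncsmult j a"
  by (rule ext) (simp add: ncsmult_def left_diff_distrib)
lemma ncsmult_minus1: "ncsmult (-1) a = - a"
  by (rule ext) (simp add: ncsmult_def)

definition flipl :: "(bool \<times> nat) list \<Rightarrow> (bool \<times> nat) list" where
  "flipl u = rev (map (\<lambda>(b, i). (\<not> b, i)) u)"

lemma flipl_flipl[simp]: "flipl (flipl u) = u"
  by (simp add: flipl_def rev_map comp_def case_prod_unfold)
lemma flipl_append: "flipl (x @ y) = flipl y @ flipl x"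
  by (simp add: flipl_def)
lemma ncstar_alt: "ncstar p u = cnj (p (flipl u))"
  by (simp add: ncstar_def flipl_def)

lemma ncstar_mul: "ncstar (ncmul p r) = ncmul (ncstar r) (ncstar p)"
proof
  fix u
  have "ncstar (ncmul p r) u = (\<Sum>(x,y)\<in>{(x,y). x @ y = flipl u}. cnj (p x) * cnj (r y))"
    by (simp add: ncstar_alt ncmul_alt case_prod_unfold)
  also have "\<dots> = (\<Sum>(a,b)\<in>{(x,y). x @ y = u}. cnj (r (flipl a)) * cnj (p (flipl b)))"
    apply (rule sum.reindex_bij_witness[where i="\<lambda>(a,b). (flipl b, flipl a)" and j="\<lambda>(x,y). (flipl y, flipl x)"])
        apply (auto simp: flipl_append)
    apply (metis flipl_append flipl_flipl)
    done
  also have "\<dots> = ncmul (ncstar r) (ncstar p) u"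
    by (simp add: ncstar_alt ncmul_alt case_prod_unfold)
  finally show "ncstar (ncmul p r) u = ncmul (ncstar r) (ncstar p) u" .
qed

lemma ncstar_add: "ncstar (a + b) = ncstar a + ncstar b"
  by (rule ext) (simp add: ncstar_alt)
lemma ncstar_zero[simp]: "ncstar 0 = 0"
  by (rule ext) (simp add: ncstar_alt)
lemma ncstar_smult: "ncstar (ncsmult k a) = ncsmult (cnj k) (ncstar a)"
  by (rule ext) (simp add: ncstar_alt ncsmult_def)
lemma ncstar_sum: "ncstar (\<Sum>i\<in>S. f i) = (\<Sum>i\<in>S. ncstar (f i))"
  by (rule additive_sum[where g="ncstar"]) (simp_all add: ncstar_add)
lemma ncstar_one[simp]: "ncstar ncone = ncone"
  by (rule ext) (simp add: ncstar_alt ncone_def flipl_def)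
lemma ncstar_zg[simp]: "ncstar (zg i) = wg i"
  by (rule ext) (auto simp: ncstar_alt zg_def wg_def ncword_def flipl_def)
lemma ncstar_wg[simp]: "ncstar (wg i) = zg i"
  by (rule ext) (auto simp: ncstar_alt zg_def wg_def ncword_def flipl_def)

lemma ncpow_Suc2: "ncpow x (Suc k) = ncmul (ncpow x k) x"
  by (induction k) (simp_all add: ncmul_assoc[symmetric])
lemma ncpow_add: "ncpow x (i + j) = ncmul (ncpow x i) (ncpow x j)"
  by (induction i) (simp_all add: ncmul_assoc)
lemma ncstar_pow: "ncstar (ncpow x k) = ncpow (ncstar x) k"
  by (induction k) (simp_all add: ncstar_mul flip: ncpow_Suc2)


definition supp :: "ncp \<Rightarrow> (bool \<times> nat) list set" where
  "supp p = {u. p u \<noteq> 0}"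

lemma ncpoly_iff: "ncpoly n p \<longleftrightarrow> finite (supp p) \<and> (\<forall>u\<in>supp p. \<forall>x\<in>set u. snd x \<in> {1..n})"
  by (auto simp: ncpoly_def supp_def)

lemma ncpoly_zero[simp]: "ncpoly n 0"
  by (simp add: ncpoly_def)

lemma ncpoly_add[intro]: "ncpoly n p \<Longrightarrow> ncpoly n r \<Longrightarrow> ncpoly n (p + r)"
proof -
  assume a: "ncpoly n p" "ncpoly n r"
  have "{u. (p + r) u \<noteq> 0} \<subseteq> {u. p u \<noteq> 0} \<union> {u. r u \<noteq> 0}" by auto
  then show ?thesis using a unfolding ncpoly_def by (auto intro: finite_subset)
qed

lemma ncpoly_smult[intro]: "ncpoly n p \<Longrightarrow> ncpoly n (ncsmult c p)"
proof -
  assume a: "ncpoly n p"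
  have "{u. ncsmult c p u \<noteq> 0} \<subseteq> {u. p u \<noteq> 0}" by (auto simp: ncsmult_def)
  then show ?thesis using a unfolding ncpoly_def by (auto intro: finite_subset simp: ncsmult_def)
qed

lemma ncpoly_uminus[intro]: "ncpoly n p \<Longrightarrow> ncpoly n (- p)"
  using ncpoly_smult[of n p "-1"] by (simp add: ncsmult_minus1)

lemma ncpoly_diff[intro]: "ncpoly n p \<Longrightarrow> ncpoly n r \<Longrightarrow> ncpoly n (p - r)"
  unfolding diff_conv_add_uminus by (intro ncpoly_add ncpoly_uminus)

lemma ncpoly_sum[intro]: "(\<And>i. i \<in> S \<Longrightarrow> ncpoly n (f i)) \<Longrightarrow> ncpoly n (\<Sum>i\<in>S. f i)"
  by (induction S rule: infinite_finite_induct) auto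

lemma ncpoly_mul[intro]: "ncpoly n p \<Longrightarrow> ncpoly n r \<Longrightarrow> ncpoly n (ncmul p r)"
proof -
  assume a: "ncpoly n p" "ncpoly n r"
  have sub: "{u. ncmul p r u \<noteq> 0} \<subseteq> (\<lambda>(x,y). x @ y) ` ({u. p u \<noteq> 0} \<times> {u. r u \<noteq> 0})"
  proof
    fix u assume "u \<in> {u. ncmul p r u \<noteq> 0}"
    then have "(\<Sum>k\<le>length u. p (take k u) * r (drop k u)) \<noteq> 0" by (simp add: ncmul_def)
    then obtain k where "p (take k u) * r (drop k u) \<noteq> 0" by (meson sum.neutral)
    then show "u \<in> (\<lambda>(x,y). x @ y) ` ({u. p u \<noteq> 0} \<times> {u. r u \<noteq> 0})"
      by (intro image_eqI[where x="(take k u, drop k u)"]) auto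
  qed
  have "finite ((\<lambda>(x,y). x @ y) ` ({u. p u \<noteq> 0} \<times> {u. r u \<noteq> 0}))"
    using a by (simp add: ncpoly_def)
  then have fin: "finite {u. ncmul p r u \<noteq> 0}"
    by (rule finite_subset[OF sub])
  have "\<forall>x\<in>set u. snd x \<in> {1..n}" if "ncmul p r u \<noteq> 0" for u
  proof -
    from that have "u \<in> {u. ncmul p r u \<noteq> 0}" by simp
    then have "u \<in> (\<lambda>(x,y). x @ y) ` ({u. p u \<noteq> 0} \<times> {u. r u \<noteq> 0})" by (rule subsetD[OF sub])
    then obtain x y where "u = x @ y" "p x \<noteq> 0" "r y \<noteq> 0" by auto
    then show ?thesis using a unfolding ncpoly_def by auto
  qed
  then show ?thesis using fin by (simp add: ncpoly_def)
qed

lemma ncpoly_word[intro]: "(\<forall>x\<in>set v. snd x \<in> {1..n}) \<Longrightarrow> ncpoly n (ncword v)"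
  by (auto simp: ncpoly_def ncword_def)

lemma ncpoly_one[simp]: "ncpoly n ncone"
  by (auto simp: ncpoly_def ncone_def)

lemma ncpoly_zg[intro]: "1 \<le> i \<Longrightarrow> i \<le> n \<Longrightarrow> ncpoly n (zg i)"
  by (auto simp: zg_def)
lemma ncpoly_wg[intro]: "1 \<le> i \<Longrightarrow> i \<le> n \<Longrightarrow> ncpoly n (wg i)"
  by (auto simp: wg_def)

lemma ncpoly_pow[intro]: "ncpoly n x \<Longrightarrow> ncpoly n (ncpow x k)"
  by (induction k) auto

lemma ncpoly_Qsum[intro]: "i \<le> n \<Longrightarrow> ncpoly n (Qsum i)"
  unfolding Qsum_def by (intro ncpoly_sum ncpoly_mul) auto

lemma ncpoly_star[intro]: "ncpoly n p \<Longrightarrow> ncpoly n (ncstar p)"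
proof -
  assume a: "ncpoly n p"
  have eq: "{u. ncstar p u \<noteq> 0} = flipl ` {u. p u \<noteq> 0}"
    by (auto simp: ncstar_alt intro!: image_eqI[where x="flipl _"])
  have set_flip: "\<forall>x\<in>set (flipl u). snd x \<in> {1..n}" if "\<forall>x\<in>set u. snd x \<in> {1..n}" for u
    using that by (auto simp: flipl_def)
  have fin: "finite {u. ncstar p u \<noteq> 0}"
    unfolding eq using a by (simp add: ncpoly_def)
  have "\<forall>x\<in>set u. snd x \<in> {1..n}" if "ncstar p u \<noteq> 0" for u
  proof -
    have "p (flipl u) \<noteq> 0" using that by (simp add: ncstar_alt)
    then have "\<forall>x\<in>set (flipl u). snd x \<in> {1..n}" using a by (simp add: ncpoly_def)
    then show ?thesis using set_flip[of "flipl u"] by simp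
  qed
  then show ?thesis using fin by (simp add: ncpoly_def)
qed

lemma sum_fun_apply: "(\<Sum>i\<in>S. f i) v = (\<Sum>i\<in>S. (f i :: ncp) v)"
  by (rule additive_sum[where g="\<lambda>p. p v"]) simp_all

lemma ncpoly_expand: "ncpoly n p \<Longrightarrow> p = (\<Sum>u\<in>supp p. ncsmult (p u) (ncword u))"
proof
  fix v assume a: "ncpoly n p"
  then have fin: "finite (supp p)" by (simp add: ncpoly_iff)
  have "(\<Sum>u\<in>supp p. ncsmult (p u) (ncword u)) v = (\<Sum>u\<in>supp p. if u = v then p v else 0)"
    using fin unfolding sum_fun_apply ncsmult_def ncword_def by (intro sum.cong) auto
  also have "\<dots> = p v" using fin by (simp add: supp_def)
  finally show "p v = (\<Sum>u\<in>supp p. ncsmult (p u) (ncword u)) v" by simp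
qed

lemma ncword_append: "ncmul (ncword a) (ncword b) = ncword (a @ b)"
proof
  fix u
  have "ncmul (ncword a) (ncword b) u = (\<Sum>xy\<in>spl u. if xy = (a, b) then 1 else 0)"
    unfolding ncmul_spl ncword_def by (rule sum.cong) auto
  also have "\<dots> = ncword (a @ b) u"
    by (simp add: ncword_def spl_def)
  finally show "ncmul (ncword a) (ncword b) u = ncword (a @ b) u" .
qed

lemma ncword_nil: "ncword [] = ncone"
  by (simp add: ncword_def ncone_def)

lemma I_zero: "0 \<in> Zrel_ideal q n"
  using Zrel_ideal.smult[OF Zrel_ideal.Qn, where q=q and n=n and c=0] by simp

lemma I_sum: "(\<And>i. i \<in> S \<Longrightarrow> f i \<in> Zrel_ideal q n) \<Longrightarrow> (\<Sum>i\<in>S. f i) \<in> Zrel_ideal q n"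
  by (induction S rule: infinite_finite_induct) (auto simp: I_zero intro: Zrel_ideal.add)

lemma I_uminus: "a \<in> Zrel_ideal q n \<Longrightarrow> - a \<in> Zrel_ideal q n"
  using Zrel_ideal.smult[of a q n "-1"] by (simp add: ncsmult_minus1)

lemma I_diff: "a \<in> Zrel_ideal q n \<Longrightarrow> b \<in> Zrel_ideal q n \<Longrightarrow> a - b \<in> Zrel_ideal q n"
  unfolding diff_conv_add_uminus by (intro Zrel_ideal.add I_uminus)

lemma I_lword: "a \<in> Zrel_ideal q n \<Longrightarrow> \<forall>x\<in>set v. snd x \<in> {1..n} \<Longrightarrow> ncmul (ncword v) a \<in> Zrel_ideal q n"
proof (induction v)
  case Nil then show ?case by (simp add: ncword_nil)
next
  case (Cons x v)
  have "ncword (x # v) = ncmul (ncword [x]) (ncword v)" by (simp add: ncword_append)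
  then have "ncmul (ncword (x # v)) a = ncmul (ncword [(fst x, snd x)]) (ncmul (ncword v) a)"
    by (simp add: ncmul_assoc)
  moreover obtain b i where "x = (b, i)" by (cases x)
  ultimately show ?case using Cons by (auto intro!: Zrel_ideal.lmul)
qed

lemma I_rword: "a \<in> Zrel_ideal q n \<Longrightarrow> \<forall>x\<in>set v. snd x \<in> {1..n} \<Longrightarrow> ncmul a (ncword v) \<in> Zrel_ideal q n"
proof (induction v arbitrary: a rule: rev_induct)
  case Nil then show ?case by (simp add: ncword_nil)
next
  case (snoc x v)
  have "ncword (v @ [x]) = ncmul (ncword v) (ncword [x])" by (simp add: ncword_append)
  then have "ncmul a (ncword (v @ [x])) = ncmul (ncmul a (ncword v)) (ncword [(fst x, snd x)])"
    by (simp add: ncmul_assoc)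
  moreover obtain b i where "x = (b, i)" by (cases x)
  ultimately show ?case using snoc by (auto intro!: Zrel_ideal.rmul)
qed

lemma I_lmul: "a \<in> Zrel_ideal q n \<Longrightarrow> ncpoly n p \<Longrightarrow> ncmul p a \<in> Zrel_ideal q n"
proof -
  assume a: "a \<in> Zrel_ideal q n" "ncpoly n p"
  have "ncmul p a = (\<Sum>u\<in>supp p. ncsmult (p u) (ncmul (ncword u) a))"
    by (subst ncpoly_expand[OF a(2)]) (simp add: ncmul_sum_left ncmul_smult_left)
  also have "\<dots> \<in> Zrel_ideal q n"
    using a by (intro I_sum Zrel_ideal.smult I_lword) (auto simp: ncpoly_iff)
  finally show ?thesis .
qed

lemma I_rmul: "a \<in> Zrel_ideal q n \<Longrightarrow> ncpoly n p \<Longrightarrow> ncmul a p \<in> Zrel_ideal q n"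
proof -
  assume a: "a \<in> Zrel_ideal q n" "ncpoly n p"
  have "ncmul a p = (\<Sum>u\<in>supp p. ncsmult (p u) (ncmul a (ncword u)))"
    by (subst ncpoly_expand[OF a(2)]) (simp add: ncmul_sum_right ncmul_smult_right)
  also have "\<dots> \<in> Zrel_ideal q n"
    using a by (intro I_sum Zrel_ideal.smult I_rword) (auto simp: ncpoly_iff)
  finally show ?thesis .
qed

definition ncong :: "real \<Rightarrow> nat \<Rightarrow> ncp \<Rightarrow> ncp \<Rightarrow> bool" where
  "ncong q n a b \<longleftrightarrow> a - b \<in> Zrel_ideal q n"

lemma ncong_refl[intro]: "ncong q n a a"
  by (simp add: ncong_def I_zero)
lemma ncong_sym: "ncong q n a b \<Longrightarrow> ncong q n b a"
  unfolding ncong_def using I_uminus by fastforce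
lemma ncong_trans: "ncong q n a b \<Longrightarrow> ncong q n b c \<Longrightarrow> ncong q n a c"
  unfolding ncong_def using Zrel_ideal.add by fastforce
lemma ncong_add: "ncong q n a b \<Longrightarrow> ncong q n c d \<Longrightarrow> ncong q n (a + c) (b + d)"
  unfolding ncong_def using Zrel_ideal.add[of "a - b" q n "c - d"] by (simp add: algebra_simps)
lemma ncong_diff: "ncong q n a b \<Longrightarrow> ncong q n c d \<Longrightarrow> ncong q n (a - c) (b - d)"
  unfolding ncong_def using I_diff[of "a - b" q n "c - d"] by (simp add: algebra_simps)
lemma ncong_smult: "ncong q n a b \<Longrightarrow> ncong q n (ncsmult k a) (ncsmult k b)"
  unfolding ncong_def using Zrel_ideal.smult[of "a - b" q n k] by (simp add: ncsmult_diff)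
lemma ncong_lmul: "ncong q n a b \<Longrightarrow> ncpoly n p \<Longrightarrow> ncong q n (ncmul p a) (ncmul p b)"
  unfolding ncong_def using I_lmul[of "a - b" q n p] by (simp add: ncmul_diff_right)
lemma ncong_rmul: "ncong q n a b \<Longrightarrow> ncpoly n p \<Longrightarrow> ncong q n (ncmul a p) (ncmul b p)"
  unfolding ncong_def using I_rmul[of "a - b" q n p] by (simp add: ncmul_diff_left)
lemma ncong_mul: "ncong q n a b \<Longrightarrow> ncong q n c d \<Longrightarrow> ncpoly n b \<Longrightarrow> ncpoly n c \<Longrightarrow>
    ncong q n (ncmul a c) (ncmul b d)"
  by (meson ncong_lmul ncong_rmul ncong_trans)
lemma ncong_sum: "(\<And>i. i \<in> S \<Longrightarrow> ncong q n (f i) (g i)) \<Longrightarrow> ncong q n (\<Sum>i\<in>S. f i) (\<Sum>i\<in>S. g i)"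
  by (induction S rule: infinite_finite_induct) (auto intro: ncong_add)

lemma hn_add: "is_hn q n h \<Longrightarrow> ncpoly n p \<Longrightarrow> ncpoly n r \<Longrightarrow> h (p + r) = h p + h r"
  by (simp add: is_hn_def)
lemma hn_smult: "is_hn q n h \<Longrightarrow> ncpoly n p \<Longrightarrow> h (ncsmult c p) = c * h p"
  by (simp add: is_hn_def)
lemma hn_zero: "is_hn q n h \<Longrightarrow> h 0 = 0"
  using hn_smult[of q n h 0 0] by simp
lemma hn_sum: "is_hn q n h \<Longrightarrow> (\<And>i. i \<in> S \<Longrightarrow> ncpoly n (f i)) \<Longrightarrow> h (\<Sum>i\<in>S. f i) = (\<Sum>i\<in>S. h (f i))"
proof (induction S rule: infinite_finite_induct)
  case (insert x F)
  have "h (\<Sum>i\<in>insert x F. f i) = h (f x + (\<Sum>i\<in>F. f i))" using insert(1,2) by (subst sum.insert) auto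
  also have "\<dots> = h (f x) + h (\<Sum>i\<in>F. f i)"
    using insert by (intro hn_add) (auto intro!: ncpoly_sum)
  also have "h (\<Sum>i\<in>F. f i) = (\<Sum>i\<in>F. h (f i))" using insert by auto
  also have "h (f x) + (\<Sum>i\<in>F. h (f i)) = (\<Sum>i\<in>insert x F. h (f i))"
    by (simp only: sum.insert[OF insert(1,2)])
  finally show ?case .
qed (auto simp: hn_zero)
lemma hn_cong: "is_hn q n h \<Longrightarrow> ncong q n a b \<Longrightarrow> ncpoly n a \<Longrightarrow> ncpoly n b \<Longrightarrow> h a = h b"
proof -
  assume a: "is_hn q n h" "ncong q n a b" "ncpoly n a" "ncpoly n b"
  have "h a = h (b + (a - b))" by simp
  also have "\<dots> = h b + h (a - b)" by (rule hn_add[OF a(1) a(4) ncpoly_diff[OF a(3) a(4)]])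
  also have "h (a - b) = 0" using a by (simp add: is_hn_def ncong_def)
  finally show ?thesis by simp
qed


definition ncev :: "real poly \<Rightarrow> ncp \<Rightarrow> ncp" where
  "ncev F X = (\<Sum>i\<le>degree F. ncsmult (of_real (coeff F i)) (ncpow X i))"

lemma ncev_bound: "degree F \<le> N \<Longrightarrow> ncev F X = (\<Sum>i\<le>N. ncsmult (of_real (coeff F i)) (ncpow X i))"
proof -
  assume a: "degree F \<le> N"
  have "(\<Sum>i\<le>N. ncsmult (of_real (coeff F i)) (ncpow X i)) = (\<Sum>i\<le>degree F. ncsmult (of_real (coeff F i)) (ncpow X i))"
    using a by (intro sum.mono_neutral_right) (auto simp: coeff_eq_0)
  then show ?thesis by (simp add: ncev_def)
qed

lemma ncev_add: "ncev (F + G) X = ncev F X + ncev G X"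
proof -
  define N where "N = max (degree F) (degree G)"
  have "degree (F + G) \<le> N" unfolding N_def by (rule degree_add_le) auto
  then show ?thesis
    by (simp add: ncev_bound[of _ N] N_def ncsmult_addk sum.distrib)
qed

lemma ncev_smult: "ncev (smult c F) X = ncsmult (of_real c) (ncev F X)"
  by (simp add: ncev_bound[of "smult c F" "degree F"] ncev_def ncsmult_sum ncsmult_smult)

lemma ncev_0[simp]: "ncev 0 X = 0"
  by (simp add: ncev_def)

lemma ncev_minus: "ncev (- F) X = - ncev F X"
  using ncev_smult[of "-1" F X] by (simp add: ncsmult_minus1)

lemma ncev_diff: "ncev (F - G) X = ncev F X - ncev G X"
  using ncev_add[of F "- G" X] by (simp add: ncev_minus)

lemma ncev_pCons: "ncev (pCons a F) X = ncsmult (of_real a) ncone + ncmul X (ncev F X)"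
proof -
  define N where "N = degree F"
  have "degree (pCons a F) \<le> Suc N" by (simp add: N_def degree_pCons_le)
  then have "ncev (pCons a F) X = (\<Sum>i\<le>Suc N. ncsmult (of_real (coeff (pCons a F) i)) (ncpow X i))"
    by (rule ncev_bound)
  also have "\<dots> = ncsmult (of_real a) ncone + (\<Sum>i\<le>N. ncsmult (of_real (coeff F i)) (ncpow X (Suc i)))"
    by (subst sum.atMost_Suc_shift) simp
  also have "(\<Sum>i\<le>N. ncsmult (of_real (coeff F i)) (ncpow X (Suc i))) = ncmul X (ncev F X)"
    by (simp add: ncev_def N_def ncmul_sum_right ncmul_smult_right)
  finally show ?thesis .
qed

lemma ncev_const: "ncev [:c:] X = ncsmult (of_real c) ncone"
  using ncev_pCons[of c 0 X] by simp

lemma ncev_1[simp]: "ncev 1 X = ncone"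
  using ncev_const[of 1 X] by (simp add: one_pCons)

lemma ncev_mult: "ncev (F * G) X = ncmul (ncev F X) (ncev G X)"
proof (induction F)
  case 0 then show ?case by (metis mult_zero_left ncev_0 ncmul_zero_left)
next
  case (pCons a F)
  have "ncev (pCons a F * G) X = ncev (smult a G) X + ncev (pCons 0 (F * G)) X"
    by (simp add: ncev_add)
  also have "\<dots> = ncsmult (of_real a) (ncev G X) + ncmul X (ncmul (ncev F X) (ncev G X))"
    by (simp add: ncev_smult ncev_pCons pCons.IH)
  also have "\<dots> = ncmul (ncev (pCons a F) X) (ncev G X)"
    by (simp add: ncev_pCons ncmul_add_left ncmul_smult_left ncmul_assoc)
  finally show ?case .
qed

lemma ncev_X: "ncev [:0, 1:] X = X"
  by (simp add: ncev_pCons)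

lemma ncev_lin: "ncev [:a, b:] X = ncsmult (of_real a) ncone + ncsmult (of_real b) X"
  by (simp add: ncev_pCons ncev_const ncmul_smult_right)

lemma ncev_monom: "ncev (monom c k) X = ncsmult (of_real c) (ncpow X k)"
proof (cases "c = 0")
  case True then show ?thesis by simp
next
  case False
  have "ncev (monom c k) X = (\<Sum>i\<le>k. ncsmult (of_real (coeff (monom c k) i)) (ncpow X i))"
    by (rule ncev_bound) (simp add: degree_monom_le)
  also have "\<dots> = (\<Sum>i\<le>k. if i = k then ncsmult (of_real c) (ncpow X k) else 0)"
    by (intro sum.cong) (auto simp: coeff_monom)
  finally show ?thesis by simp
qed

lemma ncev_sum: "ncev (\<Sum>i\<in>S. f i) X = (\<Sum>i\<in>S. ncev (f i) X)"
  by (induction S rule: infinite_finite_induct) (simp_all add: ncev_add)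

lemma ncpoly_ncev[intro]: "ncpoly n X \<Longrightarrow> ncpoly n (ncev F X)"
  unfolding ncev_def by (intro ncpoly_sum ncpoly_smult ncpoly_pow)

lemma ncstar_ncev: "ncstar X = X \<Longrightarrow> ncstar (ncev F X) = ncev F X"
  by (simp add: ncev_def ncstar_sum ncstar_smult ncstar_pow)

lemma ncev_comm: "ncmul (ncev F X) (ncev G X) = ncmul (ncev G X) (ncev F X)"
  by (simp flip: ncev_mult add: mult.commute)

lemma ncstar_Qsum: "ncstar (Qsum i) = Qsum i"
  by (simp add: Qsum_def ncstar_sum ncstar_mul)


declare ncong_trans[trans]
lemma ncong_eq_trans[trans]: "a = b \<Longrightarrow> ncong q n b c \<Longrightarrow> ncong q n a c" by simp
lemma ncong_trans_eq[trans]: "ncong q n a b \<Longrightarrow> b = c \<Longrightarrow> ncong q n a c" by simp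

lemma ncongI: "a = b \<Longrightarrow> ncong q n a b" by auto

context
  fixes q :: real and n :: nat
  assumes n2: "2 \<le> n"
begin

abbreviation "zz \<equiv> zg n"
abbreviation "ww \<equiv> wg n"
abbreviation "QQ \<equiv> Qsum (n - 1)"
abbreviation "pp \<equiv> q^2"

lemma pz[simp,intro]: "ncpoly n zz" using n2 by auto
lemma pw[simp,intro]: "ncpoly n ww" using n2 by auto
lemma pQ[simp,intro]: "ncpoly n QQ" by auto
lemma pEv[simp,intro]: "ncpoly n (ncev F QQ)" by (intro ncpoly_ncev pQ)
lemma pQ'[simp,intro]: "ncpoly n (Qsum (n - Suc 0))" by auto
lemma pEv'[simp,intro]: "ncpoly n (ncev F (Qsum (n - Suc 0)))" by (intro ncpoly_ncev pQ')
lemma pzd[simp,intro]: "ncpoly n (ncpow zz d)" by (intro ncpoly_pow pz)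
lemma pwd[simp,intro]: "ncpoly n (ncpow ww d)" by (intro ncpoly_pow pw)

lemma Qsum_split: "Qsum n = QQ + ncmul zz ww"
proof -
  have "{1..n} = insert n {1..n-1}" using n2 by auto
  then have "Qsum n = ncmul zz ww + QQ" unfolding Qsum_def by (simp only:) (subst sum.insert, auto)
  then show ?thesis by (simp add: add.commute)
qed

lemma R1: "ncong q n (ncmul zz ww) (ncone - QQ)"
proof -
  have "Qsum n - ncone \<in> Zrel_ideal q n" by (rule Zrel_ideal.Qn)
  moreover have "Qsum n - ncone = ncmul zz ww - (ncone - QQ)" by (simp add: Qsum_split algebra_simps)
  ultimately show ?thesis by (simp add: ncong_def)
qed

lemma R1': "ncong q n QQ (ncone - ncmul zz ww)"
proof -
  have eq: "QQ - (ncone - ncmul zz ww) = Qsum n - ncone" by (simp add: Qsum_split algebra_simps)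
  show ?thesis unfolding ncong_def eq by (rule Zrel_ideal.Qn)
qed

lemma R2: "ncong q n (ncmul ww zz) (ncone - ncsmult pp QQ)"
proof -
  have a: "ncmul ww zz - ncmul zz ww - ncsmult (of_real (1 - q^2)) QQ \<in> Zrel_ideal q n"
    using Zrel_ideal.wzi[of n n q] n2 by simp
  have b: "ncmul zz ww - (ncone - QQ) \<in> Zrel_ideal q n" using R1 by (simp add: ncong_def)
  have eq: "ncmul ww zz - (ncone - ncsmult pp QQ) =
      (ncmul ww zz - ncmul zz ww - ncsmult (of_real (1 - q^2)) QQ) + (ncmul zz ww - (ncone - QQ))"
    by (simp add: ncsmult_diffk algebra_simps)
  show ?thesis unfolding ncong_def eq by (rule Zrel_ideal.add[OF a b])
qed

lemma R3: "ncong q n (ncmul QQ zz) (ncsmult pp (ncmul zz QQ))"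
proof -
  have "ncong q n QQ (ncone - ncmul zz ww)" by (rule R1')
  then have "ncong q n (ncmul QQ zz) (ncmul (ncone - ncmul zz ww) zz)"
    by (rule ncong_rmul) auto
  also have "ncmul (ncone - ncmul zz ww) zz = zz - ncmul zz (ncmul ww zz)"
    by (simp add: ncmul_diff_left ncmul_assoc)
  also have "ncong q n \<dots> (zz - ncmul zz (ncone - ncsmult pp QQ))"
    by (intro ncong_diff ncong_refl ncong_lmul R2) auto
  also have "zz - ncmul zz (ncone - ncsmult pp QQ) = ncsmult pp (ncmul zz QQ)"
    by (simp add: ncmul_diff_right ncmul_smult_right)
  finally show ?thesis .
qed

lemma R4: "ncong q n (ncmul ww QQ) (ncsmult pp (ncmul QQ ww))"
proof -
  have "ncong q n QQ (ncone - ncmul zz ww)" by (rule R1')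
  then have "ncong q n (ncmul ww QQ) (ncmul ww (ncone - ncmul zz ww))"
    by (rule ncong_lmul) auto
  also have "ncmul ww (ncone - ncmul zz ww) = ww - ncmul (ncmul ww zz) ww"
    by (simp add: ncmul_diff_right ncmul_assoc)
  also have "ncong q n \<dots> (ww - ncmul (ncone - ncsmult pp QQ) ww)"
    by (intro ncong_diff ncong_refl ncong_rmul R2) auto
  also have "ww - ncmul (ncone - ncsmult pp QQ) ww = ncsmult pp (ncmul QQ ww)"
    by (simp add: ncmul_diff_left ncmul_smult_left)
  finally show ?thesis .
qed

lemma ncev_pcomp_pCons: "ncev (pcompose (pCons a F) [:0, c:]) X =
   ncsmult (of_real a) ncone + ncsmult (of_real c) (ncmul X (ncev (pcompose F [:0, c:]) X))"
  by (simp add: pcompose_pCons ncev_pCons ncev_smult ncmul_smult_right)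

lemma R5: "ncong q n (ncmul (ncev F QQ) zz) (ncmul zz (ncev (pcompose F [:0, pp:]) QQ))"
proof (induction F)
  case 0 show ?case by (rule ncongI) (simp only: pcompose_0 ncev_0 ncmul_zero_left ncmul_zero_right)
next
  case (pCons a F)
  let ?G = "ncev (pcompose F [:0, pp:]) QQ"
  have "ncmul (ncev (pCons a F) QQ) zz = ncsmult (of_real a) zz + ncmul QQ (ncmul (ncev F QQ) zz)"
    by (simp add: ncev_pCons ncmul_add_left ncmul_smult_left ncmul_assoc)
  also have "ncong q n \<dots> (ncsmult (of_real a) zz + ncmul QQ (ncmul zz ?G))"
    by (intro ncong_add ncong_refl ncong_lmul pCons.IH) auto
  also have "ncsmult (of_real a) zz + ncmul QQ (ncmul zz ?G) = ncsmult (of_real a) zz + ncmul (ncmul QQ zz) ?G"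
    by (simp add: ncmul_assoc)
  also have "ncong q n \<dots> (ncsmult (of_real a) zz + ncmul (ncsmult pp (ncmul zz QQ)) ?G)"
    by (intro ncong_add ncong_refl ncong_rmul R3) auto
  also have "ncsmult (of_real a) zz + ncmul (ncsmult pp (ncmul zz QQ)) ?G = ncmul zz (ncev (pcompose (pCons a F) [:0, pp:]) QQ)"
    by (simp add: ncev_pcomp_pCons ncmul_add_right ncmul_smult_left ncmul_smult_right ncmul_assoc)
  finally show ?case .
qed

lemma R6: "ncong q n (ncmul ww (ncev F QQ)) (ncmul (ncev (pcompose F [:0, pp:]) QQ) ww)"
proof (induction F)
  case 0 show ?case by (rule ncongI) (simp only: pcompose_0 ncev_0 ncmul_zero_left ncmul_zero_right)
next
  case (pCons a F)
  let ?G = "ncev (pcompose F [:0, pp:]) QQ"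
  have "ncmul ww (ncev (pCons a F) QQ) = ncsmult (of_real a) ww + ncmul (ncmul ww QQ) (ncev F QQ)"
    by (simp add: ncev_pCons ncmul_add_right ncmul_smult_right ncmul_assoc)
  also have "ncong q n \<dots> (ncsmult (of_real a) ww + ncmul (ncsmult pp (ncmul QQ ww)) (ncev F QQ))"
    by (intro ncong_add ncong_refl ncong_rmul R4) auto
  also have "ncsmult (of_real a) ww + ncmul (ncsmult pp (ncmul QQ ww)) (ncev F QQ)
     = ncsmult (of_real a) ww + ncsmult pp (ncmul QQ (ncmul ww (ncev F QQ)))"
    by (simp add: ncmul_smult_left ncmul_assoc)
  also have "ncong q n \<dots> (ncsmult (of_real a) ww + ncsmult pp (ncmul QQ (ncmul ?G ww)))"
    by (intro ncong_add ncong_refl ncong_smult ncong_lmul pCons.IH) auto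
  also have "ncsmult (of_real a) ww + ncsmult pp (ncmul QQ (ncmul ?G ww)) = ncmul (ncev (pcompose (pCons a F) [:0, pp:]) QQ) ww"
    by (simp add: ncev_pcomp_pCons ncmul_add_left ncmul_smult_left ncmul_assoc)
  finally show ?case .
qed

end


definition gp :: "real \<Rightarrow> nat \<Rightarrow> real poly" where
  "gp p j = (\<Prod>i<j. [:1, - ((1/p)^i):])"
definition Wp :: "real \<Rightarrow> nat \<Rightarrow> real poly" where
  "Wp p d = (\<Prod>i<d. [:1, - (p^(Suc i)):])"

lemma pcomp_lin: "pcompose [:a, b:] [:0, c:] = [:a, b * c:]"
  by (simp add: pcompose_pCons)

lemma pcomp_lin2: "pcompose [:0, b:] [:0, c:] = [:0, b * c:]"
  by (simp add: pcompose_pCons)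

context
  fixes q :: real and n :: nat
  assumes n2: "2 \<le> n" and q0: "0 < q"
begin

abbreviation "Zn \<equiv> zg n"
abbreviation "Wn \<equiv> wg n"
abbreviation "Qn1 \<equiv> Qsum (n - 1)"
abbreviation "p2 \<equiv> q^2"

lemma R5d: "ncong q n (ncmul (ncev F Qn1) (ncpow Zn d)) (ncmul (ncpow Zn d) (ncev (pcompose F [:0, p2^d:]) Qn1))"
proof (induction d arbitrary: F)
  case 0 show ?case by (rule ncongI) simp
next
  case (Suc d)
  have "ncmul (ncev F Qn1) (ncpow Zn (Suc d)) = ncmul (ncmul (ncev F Qn1) Zn) (ncpow Zn d)"
    by (simp add: ncmul_assoc)
  also have "ncong q n \<dots> (ncmul (ncmul Zn (ncev (pcompose F [:0, p2:]) Qn1)) (ncpow Zn d))"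
    using n2 by (intro ncong_rmul R5) auto
  also have "\<dots> = ncmul Zn (ncmul (ncev (pcompose F [:0, p2:]) Qn1) (ncpow Zn d))"
    by (simp add: ncmul_assoc)
  also have "ncong q n \<dots> (ncmul Zn (ncmul (ncpow Zn d) (ncev (pcompose (pcompose F [:0, p2:]) [:0, p2^d:]) Qn1)))"
    using n2 by (intro ncong_lmul Suc.IH) auto
  also have "pcompose (pcompose F [:0, p2:]) [:0, p2^d:] = pcompose F [:0, p2^Suc d:]"
    by (simp add: pcompose_assoc[symmetric] pcomp_lin2 mult.commute)
  also have "ncmul Zn (ncmul (ncpow Zn d) (ncev (pcompose F [:0, p2^Suc d:]) Qn1)) =
      ncmul (ncpow Zn (Suc d)) (ncev (pcompose F [:0, p2^Suc d:]) Qn1)"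
    by (simp add: ncmul_assoc)
  finally show ?case .
qed

lemma R6d: "ncong q n (ncmul (ncpow Wn d) (ncev F Qn1)) (ncmul (ncev (pcompose F [:0, p2^d:]) Qn1) (ncpow Wn d))"
proof (induction d arbitrary: F)
  case 0 show ?case by (rule ncongI) simp
next
  case (Suc d)
  have "ncmul (ncpow Wn (Suc d)) (ncev F Qn1) = ncmul (ncpow Wn d) (ncmul Wn (ncev F Qn1))"
    by (simp only: ncmul_assoc ncpow_Suc2[of Wn d])
  also have "ncong q n \<dots> (ncmul (ncpow Wn d) (ncmul (ncev (pcompose F [:0, p2:]) Qn1) Wn))"
    using n2 by (intro ncong_lmul R6) auto
  also have "\<dots> = ncmul (ncmul (ncpow Wn d) (ncev (pcompose F [:0, p2:]) Qn1)) Wn"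
    by (simp add: ncmul_assoc)
  also have "ncong q n \<dots> (ncmul (ncmul (ncev (pcompose (pcompose F [:0, p2:]) [:0, p2^d:]) Qn1) (ncpow Wn d)) Wn)"
    using n2 by (intro ncong_rmul Suc.IH) auto
  also have "pcompose (pcompose F [:0, p2:]) [:0, p2^d:] = pcompose F [:0, p2^Suc d:]"
    by (simp add: pcompose_assoc[symmetric] pcomp_lin2 mult.commute)
  also have "ncmul (ncmul (ncev (pcompose F [:0, p2^Suc d:]) Qn1) (ncpow Wn d)) Wn =
      ncmul (ncev (pcompose F [:0, p2^Suc d:]) Qn1) (ncpow Wn (Suc d))"
    by (simp only: ncmul_assoc ncpow_Suc2[of Wn d])
  finally show ?case .
qed

lemma Zinvd: "ncong q n (ncmul (ncpow Zn d) (ncev G Qn1)) (ncmul (ncev (pcompose G [:0, (1/p2)^d:]) Qn1) (ncpow Zn d))"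
proof -
  have "pcompose (pcompose G [:0, (1/p2)^d:]) [:0, p2^d:] = G"
    using q0 by (simp add: pcompose_assoc[symmetric] pcomp_lin2 power_one_over)
  then show ?thesis
    using R5d[of "pcompose G [:0, (1/p2)^d:]" d] by (metis ncong_sym)
qed

lemma ncsmult_neg: "ncsmult (- k) a = - ncsmult k a"
  by (rule ext) (simp add: ncsmult_def)

lemma ncev_R2: "ncong q n (ncmul Wn Zn) (ncev [:1, - p2:] Qn1)"
proof -
  have "ncev [:1, - p2:] Qn1 = ncone - ncsmult p2 Qn1"
    by (simp add: ncev_lin ncsmult_neg)
  then show ?thesis using R2[OF n2, of q] by simp
qed

lemma ncev_R1: "ncong q n (ncmul Zn Wn) (ncev [:1, - 1:] Qn1)"
proof -
  have "ncev [:1, - 1:] Qn1 = ncone - Qn1"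
    by (simp add: ncev_lin ncsmult_neg)
  then show ?thesis using R1[OF n2, of q] by simp
qed

lemma R7: "ncong q n (ncmul (ncpow Wn d) (ncpow Zn d)) (ncev (Wp p2 d) Qn1)"
proof (induction d)
  case 0 show ?case by (rule ncongI) (simp add: Wp_def)
next
  case (Suc d)
  have "ncmul (ncpow Wn (Suc d)) (ncpow Zn (Suc d)) = ncmul (ncpow Wn d) (ncmul (ncmul Wn Zn) (ncpow Zn d))"
    by (simp only: ncmul_assoc ncpow_Suc2[of Wn d] ncpow.simps(2)[of Zn d])
  also have "ncong q n \<dots> (ncmul (ncpow Wn d) (ncmul (ncev [:1, - p2:] Qn1) (ncpow Zn d)))"
    using n2 by (intro ncong_lmul ncong_rmul ncev_R2) auto
  also have "ncong q n \<dots> (ncmul (ncpow Wn d) (ncmul (ncpow Zn d) (ncev (pcompose [:1, - p2:] [:0, p2^d:]) Qn1)))"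
    using n2 by (intro ncong_lmul R5d) auto
  also have "\<dots> = ncmul (ncmul (ncpow Wn d) (ncpow Zn d)) (ncev (pcompose [:1, - p2:] [:0, p2^d:]) Qn1)"
    by (simp add: ncmul_assoc)
  also have "ncong q n \<dots> (ncmul (ncev (Wp p2 d) Qn1) (ncev (pcompose [:1, - p2:] [:0, p2^d:]) Qn1))"
    using n2 by (intro ncong_rmul Suc.IH) auto
  also have "\<dots> = ncev (Wp p2 (Suc d)) Qn1"
    by (simp add: ncev_mult[symmetric] Wp_def pcomp_lin)
  finally show ?case .
qed

lemma gp_step: "pcompose (gp p2 j) [:0, 1/p2:] * [:1, - 1:] = gp p2 (Suc j)"
proof -
  have "poly (pcompose (gp p2 j) [:0, 1/p2:] * [:1, - 1:]) x = poly (gp p2 (Suc j)) x" for x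
  proof -
    have e1: "poly (pcompose (gp p2 j) [:0, 1/p2:]) x = (\<Prod>i<j. 1 - (1/p2)^i * (x / p2))"
      by (simp add: gp_def poly_pcompose poly_prod mult.commute)
    have e2: "(\<Prod>i<j. 1 - (1/p2)^i * (x / p2)) = (\<Prod>i<j. 1 - (1/p2)^Suc i * x)"
      by (intro prod.cong) (simp_all add: power_Suc divide_inverse mult_ac)
    have e3: "poly (gp p2 (Suc j)) x = (1 - x) * (\<Prod>i<j. 1 - (1/p2)^Suc i * x)"
      unfolding gp_def prod.lessThan_Suc_shift by (simp add: poly_prod algebra_simps del: prod.lessThan_Suc)
    show ?thesis using e1 e2 e3 by (simp add: algebra_simps)
  qed
  then have "poly (pcompose (gp p2 j) [:0, 1/p2:] * [:1, - 1:]) = poly (gp p2 (Suc j))" by (rule ext)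
  then show ?thesis by (rule poly_eq_poly_eq_iff[THEN iffD1])
qed

lemma R8: "ncong q n (ncmul (ncpow Zn j) (ncpow Wn j)) (ncev (gp p2 j) Qn1)"
proof (induction j)
  case 0 show ?case by (rule ncongI) (simp add: gp_def)
next
  case (Suc j)
  have "ncmul (ncpow Zn (Suc j)) (ncpow Wn (Suc j)) = ncmul Zn (ncmul (ncmul (ncpow Zn j) (ncpow Wn j)) Wn)"
    by (simp only: ncmul_assoc ncpow_Suc2[of Wn j] ncpow.simps(2)[of Zn j])
  also have "ncong q n \<dots> (ncmul Zn (ncmul (ncev (gp p2 j) Qn1) Wn))"
    using n2 by (intro ncong_lmul ncong_rmul Suc.IH) auto
  also have "\<dots> = ncmul (ncmul Zn (ncev (gp p2 j) Qn1)) Wn"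
    by (simp add: ncmul_assoc)
  also have "ncong q n \<dots> (ncmul (ncmul (ncev (pcompose (gp p2 j) [:0, 1/p2:]) Qn1) Zn) Wn)"
    using n2 Zinvd[of 1 "gp p2 j"] by (intro ncong_rmul) auto
  also have "\<dots> = ncmul (ncev (pcompose (gp p2 j) [:0, 1/p2:]) Qn1) (ncmul Zn Wn)"
    by (simp add: ncmul_assoc)
  also have "ncong q n \<dots> (ncmul (ncev (pcompose (gp p2 j) [:0, 1/p2:]) Qn1) (ncev [:1, - 1:] Qn1))"
    using n2 by (intro ncong_lmul ncev_R1) auto
  also have "\<dots> = ncev (gp p2 (Suc j)) Qn1"
    by (simp only: ncev_mult[symmetric] gp_step)
  finally show ?case .
qed

end


lemma qpoch_0[simp]: "qpoch a p 0 = 1"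
  by (simp add: qpoch_def)

lemma qpoch_Suc: "qpoch a p (Suc k) = qpoch a p k * (1 - a * p^k)"
  by (simp add: qpoch_def)

lemma qpoch_Suc_shift: "qpoch a p (Suc k) = (1 - a) * qpoch (a * p) p k"
  unfolding qpoch_def prod.lessThan_Suc_shift by (simp add: mult.assoc)

lemma qpoch_add: "qpoch a p (i + j) = qpoch a p i * qpoch (a * p^i) p j"
  by (induction j) (simp_all add: qpoch_Suc power_add mult.assoc mult.commute mult.left_commute)

lemma qpoch_pos: "0 \<le> a \<Longrightarrow> a < 1 \<Longrightarrow> 0 < p \<Longrightarrow> p \<le> 1 \<Longrightarrow> 0 < qpoch a p k"
proof (induction k)
  case 0 then show ?case by simp
next
  case (Suc k)
  have "p^k \<le> 1" using Suc by (simp add: power_le_one)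
  then have "a * p^k \<le> a" using Suc by (intro mult_left_le) auto
  then have "a * p^k < 1" using Suc by linarith
  then show ?case using Suc by (simp add: qpoch_Suc)
qed

lemma pow_lt1: "0 < p \<Longrightarrow> p < (1::real) \<Longrightarrow> 0 < k \<Longrightarrow> p^k < 1"
proof -
  assume a: "0 < p" "p < 1" "0 < k"
  have "p^k \<le> p^1" using a by (intro power_decreasing) auto
  then show ?thesis using a by simp
qed

definition Uc :: "real \<Rightarrow> nat \<Rightarrow> nat \<Rightarrow> real" where
  "Uc p k i = qpoch (1 / p^k) p i / qpoch p p i"

lemma Uc_0[simp]: "Uc p k 0 = 1"
  by (simp add: Uc_def)

lemma Uc_vanish: "0 < p \<Longrightarrow> k < i \<Longrightarrow> Uc p k i = 0"
proof -
  assume a: "0 < p" "k < i"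
  have "qpoch (1 / p^k) p i = 0"
    unfolding qpoch_def using a by (intro prod_zero bexI[where x=k]) auto
  then show ?thesis by (simp add: Uc_def)
qed

lemma Uc_rec: "0 < p \<Longrightarrow> p < 1 \<Longrightarrow> Uc p (Suc k) (Suc j) = Uc p k (Suc j) - (1/p)^(Suc k) * Uc p k j"
proof -
  assume p: "0 < p" "p < 1"
  have pp2: "p * p^j < 1" using pow_lt1[OF p, of "Suc j"] by simp
  have pp: "qpoch p p j > 0" "1 - p * p^j > 0"
    using p pp2 by (auto intro!: qpoch_pos)
  have e1: "qpoch (1 / p^Suc k) p (Suc j) = (1 - 1 / p^Suc k) * qpoch (1 / p^k) p j"
    using p by (simp add: qpoch_Suc_shift)
  have e2: "qpoch (1 / p^k) p (Suc j) = qpoch (1 / p^k) p j * (1 - 1 / p^k * p^j)"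
    by (simp add: qpoch_Suc)
  have e3: "qpoch p p (Suc j) = qpoch p p j * (1 - p * p^j)"
    by (simp add: qpoch_Suc)
  show ?thesis
    unfolding Uc_def e1 e2 e3 using p pp pp2
    by (simp add: field_simps power_Suc)
qed

definition VL :: "real \<Rightarrow> nat \<Rightarrow> real \<Rightarrow> real \<Rightarrow> real" where
  "VL p k x c = (\<Sum>i\<le>k. Uc p k i * p^i * qpoch x p i * qpoch (c * p^i) p (k - i))"

lemma VL_eq: "0 < p \<Longrightarrow> p < 1 \<Longrightarrow> VL p k x c = (\<Prod>r<k. x - c * p^r)"
proof (induction k arbitrary: x c)
  case 0 then show ?case by (simp add: VL_def)
next
  case (Suc k)
  note p = Suc.prems
  define T where "T i = p^i * qpoch x p i * qpoch (c * p^i) p (Suc k - i)" for i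
  have "VL p (Suc k) x c = (\<Sum>i\<le>Suc k. Uc p (Suc k) i * T i)"
    by (simp add: VL_def T_def mult.assoc)
  also have "\<dots> = Uc p (Suc k) 0 * T 0 + (\<Sum>j\<le>k. Uc p (Suc k) (Suc j) * T (Suc j))"
    by (subst sum.atMost_Suc_shift) simp
  also have "\<dots> = (Uc p k 0 * T 0 + (\<Sum>j\<le>k. Uc p k (Suc j) * T (Suc j)))
      - (1/p)^Suc k * (\<Sum>j\<le>k. Uc p k j * T (Suc j))"
    using p by (simp add: Uc_rec left_diff_distrib sum_subtractf sum_distrib_left mult.assoc)
  also have "Uc p k 0 * T 0 + (\<Sum>j\<le>k. Uc p k (Suc j) * T (Suc j)) = (\<Sum>i\<le>Suc k. Uc p k i * T i)"
    by (subst sum.atMost_Suc_shift) simp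
  also have "\<dots> = (\<Sum>i\<le>k. Uc p k i * T i)"
    using p by (simp add: Uc_vanish)
  also have "\<dots> = (1 - c * p^k) * VL p k x c"
    unfolding VL_def sum_distrib_left
  proof (rule sum.cong)
    fix i assume "i \<in> {..k}"
    then have i: "i \<le> k" by simp
    then have "Suc k - i = Suc (k - i)" by simp
    then have "qpoch (c * p^i) p (Suc k - i) = qpoch (c * p^i) p (k - i) * (1 - c * p^k)"
      using i by (simp add: qpoch_Suc power_add[symmetric] mult.assoc)
    then show "Uc p k i * T i = (1 - c * p^k) * (Uc p k i * p^i * qpoch x p i * qpoch (c * p^i) p (k - i))"
      by (simp add: T_def mult_ac)
  qed simp
  also have "(\<Sum>j\<le>k. Uc p k j * T (Suc j)) = p * (1 - x) * VL p k (x * p) (c * p)"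
    unfolding VL_def sum_distrib_left
  proof (rule sum.cong)
    fix j assume "j \<in> {..k}"
    then have "Suc k - Suc j = k - j" by simp
    then show "Uc p k j * T (Suc j) = p * (1 - x) * (Uc p k j * p^j * qpoch (x * p) p j * qpoch (c * p * p^j) p (k - j))"
      by (simp add: T_def qpoch_Suc_shift mult_ac)
  qed simp
  also have "VL p k (x * p) (c * p) = (\<Prod>r<k. p * (x - c * p^r))"
    using Suc.IH[OF p] by (simp add: algebra_simps)
  also have "\<dots> = p^k * (\<Prod>r<k. x - c * p^r)"
    by (simp add: prod.distrib)
  also have "VL p k x c = (\<Prod>r<k. x - c * p^r)" using Suc.IH[OF p] .
  finally have "VL p (Suc k) x c = (1 - c * p^k) * (\<Prod>r<k. x - c * p^r) - (1/p)^Suc k * (p * (1 - x) * (p^k * (\<Prod>r<k. x - c * p^r)))" .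
  also have "\<dots> = (x - c * p^k) * (\<Prod>r<k. x - c * p^r)"
    using p by (simp add: field_simps power_Suc)
  finally show ?case by (simp add: mult.commute)
qed


definition mu :: "real \<Rightarrow> nat \<Rightarrow> nat \<Rightarrow> real" where
  "mu p a i = (1 - p^a) / (1 - p^(a+i))"

definition Lf :: "real \<Rightarrow> nat \<Rightarrow> real poly \<Rightarrow> real" where
  "Lf p a F = (\<Sum>i\<le>degree F. coeff F i * mu p a i)"

lemma Lf_bound: "degree F \<le> N \<Longrightarrow> Lf p a F = (\<Sum>i\<le>N. coeff F i * mu p a i)"
proof -
  assume "degree F \<le> N"
  then have "(\<Sum>i\<le>N. coeff F i * mu p a i) = (\<Sum>i\<le>degree F. coeff F i * mu p a i)"
    by (intro sum.mono_neutral_right) (auto simp: coeff_eq_0)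
  then show ?thesis by (simp add: Lf_def)
qed

lemma Lf_add: "Lf p a (F + G) = Lf p a F + Lf p a G"
proof -
  define N where "N = max (degree F) (degree G)"
  have "degree (F + G) \<le> N" unfolding N_def by (rule degree_add_le) auto
  then show ?thesis
    by (simp add: Lf_bound[of _ N] N_def distrib_right sum.distrib)
qed

lemma Lf_smult: "Lf p a (smult c F) = c * Lf p a F"
  by (simp add: Lf_bound[of "smult c F" "degree F"] Lf_def sum_distrib_left mult.assoc)

lemma Lf_0[simp]: "Lf p a 0 = 0"
  by (simp add: Lf_def)

lemma Lf_minus: "Lf p a (- F) = - Lf p a F"
  using Lf_smult[of p a "-1" F] by simp

lemma Lf_diff: "Lf p a (F - G) = Lf p a F - Lf p a G"
  using Lf_add[of p a F "- G"] by (simp add: Lf_minus)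

lemma Lf_1: "Lf p a 1 = 1" if "0 < p" "p < 1" "0 < a"
proof -
  have "p^a < 1" using that by (intro pow_lt1) auto
  then show ?thesis by (simp add: Lf_def mu_def)
qed

lemma Lf_monom: "Lf p a (monom c i) = c * mu p a i"
proof -
  have "Lf p a (monom c i) = (\<Sum>j\<le>i. coeff (monom c i) j * mu p a j)"
    by (rule Lf_bound) (simp add: degree_monom_le)
  also have "\<dots> = (\<Sum>j\<le>i. if j = i then c * mu p a i else 0)"
    by (intro sum.cong) (auto simp: coeff_monom)
  finally show ?thesis by simp
qed

context
  fixes p :: real and a :: nat
  assumes p0: "0 < p" and p1: "p < 1" and a0: "0 < a"
begin

lemma pa_lt: "p^(a+i) < 1" using p0 p1 a0 by (intro pow_lt1) auto

lemma Lf_FE: "Lf p a F = (1 - p^a) * poly F 1 + p^a * Lf p a (pcompose F [:0, p:])"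
proof -
  define N where "N = degree F"
  have dg: "degree (pcompose F [:0, p:]) \<le> N"
    unfolding N_def by (simp add: degree_pcompose)
  have "Lf p a F - p^a * Lf p a (pcompose F [:0, p:]) = (\<Sum>i\<le>N. coeff F i * mu p a i * (1 - p^(a+i)))"
  proof -
    have e1: "Lf p a (pcompose F [:0, p:]) = (\<Sum>i\<le>N. coeff (pcompose F [:0, p:]) i * mu p a i)"
      by (rule Lf_bound[OF dg])
    have e2: "Lf p a F = (\<Sum>i\<le>N. coeff F i * mu p a i)" by (simp add: Lf_def N_def)
    show ?thesis unfolding e1 e2
      by (simp add: coeff_pcompose_linear sum_distrib_left sum_subtractf[symmetric] algebra_simps power_add)
  qed
  also have "\<dots> = (\<Sum>i\<le>N. coeff F i * (1 - p^a))"
  proof (rule sum.cong)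
    fix i
    have "1 - p^(a+i) \<noteq> 0" using pa_lt[of i] by simp
    then show "coeff F i * mu p a i * (1 - p^(a+i)) = coeff F i * (1 - p^a)"
      by (simp add: mu_def)
  qed simp
  also have "\<dots> = (1 - p^a) * poly F 1"
    by (simp add: poly_altdef N_def sum_distrib_left mult.commute)
  finally show ?thesis by simp
qed

lemma Lf_iter: "(\<And>r. r < d \<Longrightarrow> poly H (p^r) = 0) \<Longrightarrow> Lf p a H = p^(a*d) * Lf p a (pcompose H [:0, p^d:])"
proof (induction d arbitrary: H)
  case 0 then show ?case by simp
next
  case (Suc d)
  have "Lf p a H = (1 - p^a) * poly H 1 + p^a * Lf p a (pcompose H [:0, p:])" by (rule Lf_FE)
  also have "poly H 1 = 0" using Suc.prems[of 0] by simp
  also have "Lf p a (pcompose H [:0, p:]) = p^(a*d) * Lf p a (pcompose (pcompose H [:0, p:]) [:0, p^d:])"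
  proof (rule Suc.IH)
    fix r assume "r < d"
    then show "poly (pcompose H [:0, p:]) (p^r) = 0"
      using Suc.prems[of "Suc r"] by (simp add: poly_pcompose mult.commute)
  qed
  also have "pcompose (pcompose H [:0, p:]) [:0, p^d:] = pcompose H [:0, p^Suc d:]"
    by (simp add: pcompose_assoc[symmetric] pcomp_lin2 mult.commute)
  finally show ?case by (simp add: power_add power_mult_distrib mult.assoc power_Suc2 power_mult)
qed

definition nu :: "nat \<Rightarrow> nat \<Rightarrow> real" where
  "nu i g = (1 - p^a) * qpoch p p g / qpoch (p^(a+i)) p (Suc g)"

lemma qpos: "0 < qpoch (p^(a+i)) p g"
  using pa_lt[of i] p0 p1 by (intro qpoch_pos) auto

lemma Lf_monoW: "Lf p a (monom 1 i * Wp p g) = nu i g"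
proof (induction g arbitrary: i)
  case 0
  have "1 - p^(a+i) \<noteq> 0" using pa_lt[of i] by simp
  then show ?case by (simp add: Wp_def Lf_monom nu_def mu_def qpoch_def)
next
  case (Suc g)
  have eq: "monom 1 i * Wp p (Suc g) = monom 1 i * Wp p g - smult (p^Suc g) (monom 1 (Suc i) * Wp p g)"
  proof -
    have "poly (monom 1 i * Wp p (Suc g)) x = poly (monom 1 i * Wp p g - smult (p^Suc g) (monom 1 (Suc i) * Wp p g)) x" for x
      by (simp add: Wp_def poly_monom algebra_simps)
    then show ?thesis by (intro poly_eq_poly_eq_iff[THEN iffD1] ext)
  qed
  have "Lf p a (monom 1 i * Wp p (Suc g)) = nu i g - p^Suc g * nu (Suc i) g"
    unfolding eq Lf_diff Lf_smult Suc.IH ..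
  also have "\<dots> = nu i (Suc g)"
  proof -
    define D where "D = qpoch (p^(a+i)) p (Suc g)"
    define E where "E = qpoch (p^(a+Suc i)) p (Suc g)"
    have D0: "D > 0" unfolding D_def by (rule qpos)
    have E0: "E > 0" unfolding E_def by (rule qpos)
    have F1: "qpoch (p^(a+i)) p (Suc (Suc g)) = D * (1 - p^(a+i) * p^Suc g)"
      unfolding D_def by (rule qpoch_Suc)
    have F2: "qpoch (p^(a+i)) p (Suc (Suc g)) = (1 - p^(a+i)) * E"
      unfolding E_def by (subst qpoch_Suc_shift) (simp add: power_Suc2 mult.commute)
    have pp: "qpoch p p (Suc g) = qpoch p p g * (1 - p * p^g)" by (rule qpoch_Suc)
    have ne: "1 - p^(a+i) \<noteq> 0" using pa_lt[of i] by simp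
    have ne2: "1 - p^(a+i) * p^Suc g \<noteq> 0"
      using pa_lt[of "i + Suc g"] by (simp add: power_add mult_ac)
    have "nu i g - p^Suc g * nu (Suc i) g = (1 - p^a) * qpoch p p g * (1 / D - p^Suc g / E)"
      using D0 E0 unfolding nu_def D_def[symmetric] E_def[symmetric] by (simp add: field_simps)
    also have "1 / D - p^Suc g / E = (1 - p^Suc g) / qpoch (p^(a+i)) p (Suc (Suc g))"
    proof -
      have "1 / D = (1 - p^(a+i) * p^Suc g) / qpoch (p^(a+i)) p (Suc (Suc g))"
        using D0 ne2 by (simp add: F1)
      moreover have "p^Suc g / E = p^Suc g * (1 - p^(a+i)) / qpoch (p^(a+i)) p (Suc (Suc g))"
        using E0 ne by (simp add: F2)
      ultimately show ?thesis by (simp add: diff_divide_distrib[symmetric] algebra_simps)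
    qed
    also have "(1 - p^a) * qpoch p p g * ((1 - p^Suc g) / qpoch (p^(a+i)) p (Suc (Suc g))) = nu i (Suc g)"
      by (simp add: nu_def pp power_Suc)
    finally show ?thesis .
  qed
  finally show ?case .
qed

end


lemma qpoch_nz_gt1: "1 < r \<Longrightarrow> qpoch r r k \<noteq> 0"
proof -
  assume r: "1 < r"
  have "1 - r * r^j \<noteq> 0" for j
  proof -
    have "1 < r^Suc j" using r by (intro one_less_power) auto
    then show ?thesis by simp
  qed
  then show ?thesis unfolding qpoch_def by (simp add: prod_zero_iff)
qed

definition hv :: "real \<Rightarrow> nat \<Rightarrow> nat \<Rightarrow> real" where
  "hv p a j = qpoch (1/p) (1/p) j * qpoch (1/p) (1/p) a / qpoch (1/p) (1/p) (j + a)"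

lemma gp_Suc: "gp p (Suc j) = gp p j * [:1, - ((1/p)^j):]"
  by (simp add: gp_def)

context
  fixes p :: real and a :: nat
  assumes p0: "0 < p" and p1: "p < 1" and a0: "0 < a"
begin

lemma gp_pcomp: "pcompose (gp p (Suc j)) [:0, p:] = [:1, - p:] * gp p j"
proof -
  have "poly (pcompose (gp p (Suc j)) [:0, p:]) x = poly ([:1, - p:] * gp p j) x" for x
  proof -
    have e1: "poly (pcompose (gp p (Suc j)) [:0, p:]) x = (1 - p * x) * (\<Prod>i<j. 1 - (1/p)^Suc i * (p * x))"
      unfolding gp_def prod.lessThan_Suc_shift using p0 by (simp add: poly_pcompose poly_prod algebra_simps del: prod.lessThan_Suc)
    have e2: "(\<Prod>i<j. 1 - (1/p)^Suc i * (p * x)) = (\<Prod>i<j. 1 - (1/p)^i * x)"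
      using p0 by (intro prod.cong) (simp_all add: power_Suc)
    have e3: "poly ([:1, - p:] * gp p j) x = (1 - p * x) * (\<Prod>i<j. 1 - (1/p)^i * x)"
      by (simp add: gp_def poly_prod algebra_simps)
    show ?thesis by (simp only: e1 e2 e3)
  qed
  then have "poly (pcompose (gp p (Suc j)) [:0, p:]) = poly ([:1, - p:] * gp p j)" by (rule ext)
  then show ?thesis by (rule poly_eq_poly_eq_iff[THEN iffD1])
qed

lemma gp_at1: "poly (gp p (Suc j)) 1 = 0"
  unfolding gp_def poly_prod by (intro prod_zero bexI[where x=0]) auto

lemma Lf_gp_rec: "Lf p a (gp p (Suc j)) * (1 - p^(a + Suc j)) = p^a * (1 - p^Suc j) * Lf p a (gp p j)"
proof -
  define T where "T = Lf p a (gp p j)"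
  define T1 where "T1 = Lf p a (gp p (Suc j))"
  define X where "X = Lf p a (pCons 0 (gp p j))"
  have ea: "[:1, - p:] * gp p j = gp p j - smult p (pCons 0 (gp p j))"
    by simp
  have "T1 = (1 - p^a) * poly (gp p (Suc j)) 1 + p^a * Lf p a (pcompose (gp p (Suc j)) [:0, p:])"
    unfolding T1_def using p0 p1 a0 by (rule Lf_FE)
  also have "Lf p a (pcompose (gp p (Suc j)) [:0, p:]) = T - p * X"
    by (simp only: gp_pcomp ea Lf_diff Lf_smult T_def X_def)
  also have "(1 - p^a) * poly (gp p (Suc j)) 1 + p^a * (T - p * X) = p^a * (T - p * X)"
    by (simp add: gp_at1)
  finally have A: "T1 = p^a * (T - p * X)" .
  have eb: "gp p (Suc j) = gp p j - smult ((1/p)^j) (pCons 0 (gp p j))"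
    by (simp add: gp_Suc algebra_simps)
  have B: "T1 = T - (1/p)^j * X"
    unfolding T1_def T_def X_def by (subst eb) (simp only: Lf_diff Lf_smult)
  have "p^j * (1/p)^j = 1" using p0 by (simp add: power_one_over)
  then have X: "X = p^j * (T - T1)" using B by (metis (no_types, lifting) add_diff_cancel_left' diff_add_cancel mult.assoc mult.left_neutral)
  have "T1 * (1 - p^(a + Suc j)) = p^a * (1 - p^Suc j) * T"
    using A unfolding X by (simp add: algebra_simps power_add)
  then show ?thesis by (simp add: T_def T1_def)
qed

lemma hv_rec: "hv p a (Suc j) * (1 - p^(a + Suc j)) = p^a * (1 - p^Suc j) * hv p a j"
proof -
  define r where "r = 1 / p"
  have r1: "1 < r" using p0 p1 by (simp add: r_def)
  have nz1: "qpoch r r (j + a) \<noteq> 0" by (rule qpoch_nz_gt1[OF r1])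
  have nz2: "1 - r * r^(j+a) \<noteq> 0"
  proof -
    have "1 < r^Suc (j+a)" using r1 by (intro one_less_power) auto
    then show ?thesis by simp
  qed
  have e1: "qpoch r r (Suc j) = qpoch r r j * (1 - r * r^j)" by (rule qpoch_Suc)
  have e2: "qpoch r r (Suc j + a) = qpoch r r (j + a) * (1 - r * r^(j+a))"
    by (simp add: qpoch_Suc)
  define u where "u = p^Suc j"
  define v where "v = p^a"
  have u0: "u > 0" "v > 0" using p0 by (simp_all add: u_def v_def)
  have uv: "u * v \<noteq> 1"
    using pow_lt1[OF p0 p1, of "a + Suc j"] by (simp add: u_def v_def power_add mult_ac)
  have ru: "r * r^j = 1 / u" by (simp add: r_def u_def power_one_over)
  have ruv: "r * r^(j+a) = 1 / (u * v)" by (simp add: r_def u_def v_def power_one_over power_add)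
  have pauv: "p^(a + Suc j) = u * v" by (simp add: u_def v_def power_add mult.commute)
  have H1: "hv p a (Suc j) = hv p a j * ((1 - r * r^j) / (1 - r * r^(j+a)))"
    unfolding hv_def r_def[symmetric] e1 e2 using nz1 nz2 by (simp add: field_simps)
  have H2: "(1 - r * r^j) / (1 - r * r^(j+a)) * (1 - p^(a + Suc j)) = p^a * (1 - p^Suc j)"
    unfolding ru ruv pauv u_def[symmetric] v_def[symmetric] using u0 uv
    by (simp add: field_simps)
  have "hv p a (Suc j) * (1 - p^(a + Suc j)) = hv p a j * ((1 - r * r^j) / (1 - r * r^(j+a)) * (1 - p^(a + Suc j)))"
    unfolding H1 by (simp only: mult.assoc)
  also have "\<dots> = hv p a j * (p^a * (1 - p^Suc j))" unfolding H2 ..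
  finally show ?thesis by (simp only: mult_ac)
qed

lemma Lf_gp: "Lf p a (gp p j) = hv p a j"
proof (induction j)
  case 0
  have "qpoch (1/p) (1/p) a \<noteq> 0" using p0 p1 by (intro qpoch_nz_gt1) simp
  then show ?case using Lf_1[OF p0 p1 a0] by (simp add: gp_def hv_def)
next
  case (Suc j)
  have nz: "1 - p^(a + Suc j) \<noteq> 0" using pow_lt1[OF p0 p1, of "a + Suc j"] by simp
  have "Lf p a (gp p (Suc j)) * (1 - p^(a + Suc j)) = hv p a (Suc j) * (1 - p^(a + Suc j))"
    using Lf_gp_rec hv_rec Suc.IH by simp
  then show ?case using nz by simp
qed

end


lemma basis_ind:
  fixes b :: "nat \<Rightarrow> real poly" and S :: "real poly \<Rightarrow> bool"
  assumes deg: "\<And>j. degree (b j) = j" and lc: "\<And>j. coeff (b j) j \<noteq> 0"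
    and S0: "S 0" and Sadd: "\<And>F G c. S F \<Longrightarrow> S G \<Longrightarrow> S (F + smult c G)"
  shows "(\<And>j. j < t \<Longrightarrow> S (b j)) \<Longrightarrow> (\<And>i. t \<le> i \<Longrightarrow> coeff F i = 0) \<Longrightarrow> S F"
proof (induction t arbitrary: F)
  case 0
  then have "F = 0" by (intro poly_eqI) auto
  then show ?case using S0 by simp
next
  case (Suc t)
  define c where "c = coeff F t / coeff (b t) t"
  define F' where "F' = F - smult c (b t)"
  have "S F'"
  proof (rule Suc.IH)
    fix j assume "j < t" then show "S (b j)" using Suc.prems(1) by simp
  next
    fix i assume i: "t \<le> i"
    show "coeff F' i = 0"
    proof (cases "i = t")
      case True then show ?thesis using lc[of t] by (simp add: F'_def c_def)
    next
      case False
      then have "t < i" using i by simp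
      then have "coeff (b t) i = 0" using deg[of t] by (intro coeff_eq_0) simp
      moreover have "coeff F i = 0" using Suc.prems(2) \<open>t < i\<close> by simp
      ultimately show ?thesis by (simp add: F'_def)
    qed
  qed
  moreover have "S (b t)" using Suc.prems(1) by simp
  ultimately have "S (F' + smult c (b t))" by (rule Sadd)
  then show ?case by (simp add: F'_def)
qed

lemma deg_lin_prod:
  fixes f :: "nat \<Rightarrow> real"
  assumes "\<And>i. f i \<noteq> 0"
  shows "degree (\<Prod>i<j. [:1, f i:]) = j" "coeff (\<Prod>i<j. [:1, f i:]) j = (\<Prod>i<j. f i)"
proof -
  have nz: "\<forall>i\<in>{..<j}. [:1, f i:] \<noteq> 0" by simp
  have d: "degree [:1, f i:] = 1" for i using assms[of i] by simp
  show dg: "degree (\<Prod>i<j. [:1, f i:]) = j"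
    using degree_prod_eq_sum_degree[OF nz] d by simp
  have "lead_coeff (\<Prod>i<j. [:1, f i:]) = (\<Prod>i<j. lead_coeff [:1, f i:])" by (rule lead_coeff_prod)
  then show "coeff (\<Prod>i<j. [:1, f i:]) j = (\<Prod>i<j. f i)" using dg d by simp
qed

lemma Lf_sum: "Lf p a (\<Sum>i\<in>A. f i) = (\<Sum>i\<in>A. Lf p a (f i))"
  by (induction A rule: infinite_finite_induct) (simp_all add: Lf_add)

definition lqpoly :: "nat \<Rightarrow> nat \<Rightarrow> nat \<Rightarrow> real \<Rightarrow> real poly" where
  "lqpoly al be m p = (\<Sum>k\<le>m. monom (lqj_coeff al be m p k * p ^ k) k)"

lemma lqJ_ncev: "lqJ al be m p X = ncev (lqpoly al be m p) X"
  by (simp add: lqJ_def lqpoly_def ncev_sum ncev_monom)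

definition phi :: "real \<Rightarrow> nat \<Rightarrow> nat \<Rightarrow> real poly" where
  "phi p be j = (\<Prod>i<j. [:1, - (p^(be + 1 + i)):])"

lemma Wp_phi: "Wp p be * phi p be j = Wp p (be + j)"
proof (induction j)
  case 0 then show ?case by (simp add: phi_def)
next
  case (Suc j)
  have e1: "phi p be (Suc j) = phi p be j * [:1, - (p^(be + 1 + j)):]"
    by (simp add: phi_def)
  have e2: "Wp p (be + Suc j) = Wp p (be + j) * [:1, - (p^(Suc (be + j))):]"
    by (simp add: Wp_def)
  have e3: "be + 1 + j = Suc (be + j)" by simp
  show ?case unfolding e1 e2 e3 mult.assoc[symmetric] Suc.IH ..
qed

lemma lqpoly_coeff_vanish: "k < i \<Longrightarrow> coeff (lqpoly al be k p) i = 0"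
  by (simp add: lqpoly_def coeff_sum coeff_monom)

lemma lqpoly_coeff_top: "coeff (lqpoly al be k p) k = lqj_coeff al be k p k * p^k"
proof -
  have "coeff (lqpoly al be k p) k = (\<Sum>i\<le>k. if i = k then lqj_coeff al be k p k * p^k else 0)"
    unfolding lqpoly_def coeff_sum by (intro sum.cong) (auto simp: coeff_monom)
  then show ?thesis by simp
qed


context
  fixes p :: real and al be k :: nat
  assumes p0: "0 < p" and p1: "p < 1"
begin

abbreviation "aa \<equiv> Suc al"

lemma qp_pos: "0 < qpoch (p^Suc t) p g"
  using pow_lt1[OF p0 p1, of "Suc t"] p0 p1 by (intro qpoch_pos) auto

lemma qp_pos': "0 < t \<Longrightarrow> 0 < qpoch (p^t) p g"
  using qp_pos[of "t - 1"] by simp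

lemma Lf_PW: "Lf p aa (lqpoly al be k p * Wp p g) =
   (1 - p^aa) * qpoch p p g / (qpoch (p^aa) p (Suc g) * qpoch (p^(aa + Suc g)) p k) *
   (\<Prod>r<k. p^(aa + be + k) - p^(aa + Suc g) * p^r)"
proof -
  define x where "x = p^(aa + be + k)"
  define c where "c = p^(aa + Suc g)"
  define K where "K = (1 - p^aa) * qpoch p p g / (qpoch (p^aa) p (Suc g) * qpoch c p k)"
  define ci where "ci i = lqj_coeff al be k p i * p^i" for i
  have "lqpoly al be k p * Wp p g = (\<Sum>i\<le>k. smult (ci i) (monom 1 i * Wp p g))"
    unfolding lqpoly_def ci_def sum_distrib_right by (intro sum.cong) (simp_all only: mult_smult_left[symmetric] smult_monom mult.right_neutral)
  then have "Lf p aa (lqpoly al be k p * Wp p g) = (\<Sum>i\<le>k. ci i * nu p aa i g)"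
    using p0 p1 by (simp add: Lf_sum Lf_smult Lf_monoW)
  also have "\<dots> = (\<Sum>i\<le>k. K * (Uc p k i * p^i * qpoch x p i * qpoch (c * p^i) p (k - i)))"
  proof (rule sum.cong)
    fix i assume "i \<in> {..k}"
    then have ik: "i \<le> k" by simp
    have Q1: "qpoch (p^aa) p i * qpoch (p^(aa+i)) p (Suc g) = qpoch (p^aa) p (Suc g) * qpoch c p i"
      using qpoch_add[of "p^aa" p i "Suc g"] qpoch_add[of "p^aa" p "Suc g" i]
      by (simp add: c_def power_add add.commute mult_ac)
    have Q2: "qpoch c p k = qpoch c p i * qpoch (c * p^i) p (k - i)"
      using qpoch_add[of c p i "k - i"] ik by simp
    have pos1: "0 < qpoch (p^aa) p i" "0 < qpoch (p^(aa+i)) p (Suc g)" "0 < qpoch (p^aa) p (Suc g)"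
      "0 < qpoch c p i" "0 < qpoch p p i" "0 < qpoch c p k"
      using qp_pos[of al i] qp_pos[of "al + i" "Suc g"] qp_pos[of al "Suc g"]
        qp_pos[of "Suc (al + g)" i] qp_pos[of 0 i] qp_pos[of "Suc (al + g)" k]
      by (simp_all add: c_def)
    have nzq: "qpoch (c * p^i) p (k - i) \<noteq> 0" using Q2 pos1 by auto
    have lq: "lqj_coeff al be k p i = Uc p k i * qpoch x p i / qpoch (p^aa) p i"
      by (simp add: lqj_coeff_def Uc_def x_def add_ac)
    have "ci i * nu p aa i g = Uc p k i * p^i * qpoch x p i * ((1 - p^aa) * qpoch p p g)
        / (qpoch (p^aa) p i * qpoch (p^(aa+i)) p (Suc g))"
      by (simp add: ci_def lq nu_def[OF p0 p1 zero_less_Suc])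
    also have "\<dots> = Uc p k i * p^i * qpoch x p i * ((1 - p^aa) * qpoch p p g)
        / (qpoch (p^aa) p (Suc g) * qpoch c p i)" unfolding Q1 ..
    also have "\<dots> = K * (Uc p k i * p^i * qpoch x p i * qpoch (c * p^i) p (k - i))"
      unfolding K_def Q2 using pos1 nzq by (simp add: field_simps)
    finally show "ci i * nu p aa i g = K * (Uc p k i * p^i * qpoch x p i * qpoch (c * p^i) p (k - i))" .
  qed simp
  also have "\<dots> = K * VL p k x c"
    by (simp add: VL_def sum_distrib_left)
  also have "\<dots> = K * (\<Prod>r<k. x - c * p^r)"
    using p0 p1 by (simp add: VL_eq)
  finally show ?thesis by (simp add: K_def x_def c_def)
qed

lemma Lf_PW_orth: "j < k \<Longrightarrow> Lf p aa (lqpoly al be k p * Wp p (be + j)) = 0"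
proof -
  assume jk: "j < k"
  have "(\<Prod>r<k. p^(aa + be + k) - p^(aa + Suc (be + j)) * p^r) = 0"
  proof (rule prod_zero)
    show "\<exists>r\<in>{..<k}. p^(aa + be + k) - p^(aa + Suc (be + j)) * p^r = 0"
    proof (intro bexI[where x="k - j - 1"])
      have "aa + Suc (be + j) + (k - j - 1) = aa + be + k" using jk by simp
      then have "p^(aa + Suc (be + j)) * p^(k - j - 1) = p^(aa + be + k)" by (simp only: power_add[symmetric])
      then show "p^(aa + be + k) - p^(aa + Suc (be + j)) * p^(k - j - 1) = 0" by (simp only: diff_self)
    qed (use jk in auto)
  qed simp
  then show ?thesis by (simp add: Lf_PW)
qed

lemma Lf_PW_top: "Lf p aa (lqpoly al be k p * Wp p (be + k)) =
   (1 - p^aa) * qpoch p p (be + k) / (qpoch (p^aa) p (Suc (be + k)) * qpoch (p^(aa + Suc (be + k))) p k) *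
   (p^((aa + be + k) * k) * qpoch p p k)"
proof -
  have "(\<Prod>r<k. p^(aa + be + k) - p^(aa + Suc (be + k)) * p^r) = (\<Prod>r<k. p^(aa + be + k) * (1 - p * p^r))"
    by (intro prod.cong) (simp_all add: algebra_simps power_add)
  also have "\<dots> = p^((aa + be + k) * k) * qpoch p p k"
    by (simp only: prod.distrib prod_constant qpoch_def power_mult card_lessThan)
  finally show ?thesis by (simp add: Lf_PW)
qed

end


lemma K1:
  fixes p :: real assumes p0: "0 < p"
  shows "qpoch (1/p^k) p k * p^k * p^((Suc al + be + k) * k) = p^(k * Suc al) * qpoch p p k * (\<Prod>i<k. - (p^(be + 1 + i)))"
proof -
  have L: "qpoch (1/p^k) p k * p^k * p^((Suc al + be + k) * k) = (\<Prod>i<k. (1 - 1/p^k * p^i) * p * p^(Suc al + be + k))"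
    by (simp only: qpoch_def prod.distrib prod_constant card_lessThan power_mult)
  have qk: "qpoch p p k = (\<Prod>i<k. 1 - p^(k - i))"
  proof -
    have "qpoch p p k = (\<Prod>i<k. 1 - p * p^(k - Suc i))"
      unfolding qpoch_def by (rule prod.nat_diff_reindex[symmetric])
    also have "\<dots> = (\<Prod>i<k. 1 - p^(k - i))"
      by (intro prod.cong) (simp_all add: Suc_diff_Suc power_Suc[symmetric])
    finally show ?thesis .
  qed
  have R: "p^(k * Suc al) * qpoch p p k * (\<Prod>i<k. - (p^(be + 1 + i))) = (\<Prod>i<k. p^(Suc al) * (1 - p^(k - i)) * (- (p^(be + 1 + i))))"
  proof -
    have "p^(k * Suc al) = (p^(Suc al))^k" by (simp only: mult.commute[of k] power_mult)
    then show ?thesis unfolding qk by (simp only: prod.distrib prod_constant card_lessThan)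
  qed
  show ?thesis unfolding L R
  proof (rule prod.cong)
    fix i assume "i \<in> {..<k}"
    then obtain t where t: "k = i + t" "0 < t" by (metis add_diff_inverse_nat lessThan_iff less_imp_le not_less zero_less_diff)
    have kt: "k - i = t" using t by simp
    show "(1 - 1/p^k * p^i) * p * p^(Suc al + be + k) = p^(Suc al) * (1 - p^(k - i)) * (- (p^(be + 1 + i)))"
      unfolding kt using p0 unfolding t(1) by (simp add: power_add field_simps)
  qed simp
qed

lemma alg:
  fixes Y pk psk Qs Ak Qk Pn D Qbk Abk E Qs1 T F :: real
  assumes "Pn \<noteq> 0" "Qk \<noteq> 0" "Ak \<noteq> 0" "Abk \<noteq> 0" "E \<noteq> 0" "Qs1 \<noteq> 0" "F \<noteq> 0"
    and "Y * pk * psk = T * Qk * Pn" and "Qs * F = E * Qs1"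
  shows "Y * Qs / (Ak * Qk) * pk / Pn * (D * Qbk / (Abk * E * Qs1) * (psk * Qk)) = D * T / F * (Qbk * Qk / (Abk * Ak))"
proof -
  have "Y * Qs / (Ak * Qk) * pk / Pn * (D * Qbk / (Abk * E * Qs1) * (psk * Qk))
      = (Y * pk * psk) * (Qs * F) * D * Qbk * Qk / (Ak * Qk * Pn * Abk * E * Qs1 * F)"
    using assms by (simp add: field_simps)
  also have "\<dots> = (T * Qk * Pn) * (E * Qs1) * D * Qbk * Qk / (Ak * Qk * Pn * Abk * E * Qs1 * F)"
    using assms by simp
  also have "\<dots> = D * T / F * (Qbk * Qk / (Abk * Ak))"
    using assms by (simp add: field_simps)
  finally show ?thesis .
qed

context
  fixes p :: real and al be k :: nat
  assumes p0: "0 < p" and p1: "p < 1"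
begin

abbreviation "a1 \<equiv> Suc al"
abbreviation "PP \<equiv> lqpoly al be k p"

lemma phi_deg: "degree (phi p be j) = j" and phi_lc: "coeff (phi p be j) j = (\<Prod>i<j. - (p^(be + 1 + i)))"
  using deg_lin_prod[of "\<lambda>i. - (p^(be + 1 + i))" j] p0 by (simp_all add: phi_def)

lemma phi_lc_nz: "coeff (phi p be j) j \<noteq> 0"
  unfolding phi_lc using p0 by (simp add: prod_zero_iff)

lemma orth: "(\<And>i. k \<le> i \<Longrightarrow> coeff F i = 0) \<Longrightarrow> Lf p a1 (PP * (F * Wp p be)) = 0"
proof (rule basis_ind[where b="phi p be" and S="\<lambda>F. Lf p a1 (PP * (F * Wp p be)) = 0" and t=k])
  show "\<And>j. degree (phi p be j) = j" by (rule phi_deg)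
  show "\<And>j. coeff (phi p be j) j \<noteq> 0" by (rule phi_lc_nz)
  show "Lf p a1 (PP * (0 * Wp p be)) = 0" by simp
next
  fix F G c
  assume "Lf p a1 (PP * (F * Wp p be)) = 0" "Lf p a1 (PP * (G * Wp p be)) = 0"
  moreover have "PP * ((F + smult c G) * Wp p be) = PP * (F * Wp p be) + smult c (PP * (G * Wp p be))"
    by (simp add: algebra_simps)
  ultimately show "Lf p a1 (PP * ((F + smult c G) * Wp p be)) = 0"
    by (simp add: Lf_add Lf_smult)
next
  fix j assume "j < k"
  have e: "phi p be j * Wp p be = Wp p (be + j)"
    by (simp only: Wp_phi[symmetric] mult.commute)
  show "Lf p a1 (PP * (phi p be j * Wp p be)) = 0"
    unfolding e by (rule Lf_PW_orth[OF p0 p1 \<open>j < k\<close>])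
qed

definition Ntar :: real where
  "Ntar = (1 - p^a1) * p^(k * a1) / (1 - p^(a1 + be + 2 * k)) *
     (qpoch p p (be + k) * qpoch p p k / (qpoch (p^a1) p (be + k) * qpoch (p^a1) p k))"

lemma norm: "Lf p a1 (PP * (PP * Wp p be)) = Ntar"
proof -
  define cc where "cc = coeff PP k / coeff (phi p be k) k"
  define F' where "F' = PP - smult cc (phi p be k)"
  have F'0: "coeff F' i = 0" if "k \<le> i" for i
  proof (cases "i = k")
    case True then show ?thesis using phi_lc_nz[of k] by (simp add: F'_def cc_def)
  next
    case False
    then have "k < i" using that by simp
    then show ?thesis using phi_deg[of k] by (simp add: F'_def lqpoly_coeff_vanish coeff_eq_0)
  qed
  have "PP * (PP * Wp p be) = PP * (F' * Wp p be) + smult cc (PP * Wp p (be + k))"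
    by (simp add: F'_def Wp_phi[symmetric] algebra_simps)
  then have "Lf p a1 (PP * (PP * Wp p be)) = cc * Lf p a1 (PP * Wp p (be + k))"
    using orth[OF F'0] by (simp add: Lf_add Lf_smult)
  also have "\<dots> = Ntar"
  proof -
    define s where "s = a1 + be + k"
    define Pn where "Pn = (\<Prod>i<k. - (p^(be + 1 + i)))"
    have Pn0: "Pn \<noteq> 0" unfolding Pn_def using p0 by (simp add: prod_zero_iff)
    have cc: "cc = qpoch (1/p^k) p k * qpoch (p^s) p k / (qpoch (p^a1) p k * qpoch p p k) * p^k / Pn"
      unfolding cc_def lqpoly_coeff_top phi_lc Pn_def lqj_coeff_def s_def by (simp add: add_ac)
    have top: "Lf p a1 (PP * Wp p (be + k)) = (1 - p^a1) * qpoch p p (be + k) /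
        (qpoch (p^a1) p (be + k) * (1 - p^s) * qpoch (p^(s + 1)) p k) * (p^(s * k) * qpoch p p k)"
      unfolding Lf_PW_top[OF p0 p1]
      by (simp add: qpoch_Suc s_def power_add mult_ac)
    have k1: "qpoch (1/p^k) p k * p^k * p^(s * k) = p^(k * a1) * qpoch p p k * Pn"
      unfolding s_def Pn_def by (rule K1[OF p0])
    have k2: "qpoch (p^s) p k * (1 - p^(s + k)) = (1 - p^s) * qpoch (p^(s + 1)) p k"
      using qpoch_Suc[of "p^s" p k] qpoch_Suc_shift[of "p^s" p k] by (simp add: power_add mult_ac)
    have lt: "\<And>t. 0 < t \<Longrightarrow> p^t < 1" using pow_lt1[OF p0 p1] by blast
    have pos: "0 < qpoch p p k" "0 < qpoch (p^a1) p k" "0 < qpoch (p^a1) p (be + k)"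
      "0 < qpoch (p^(s + 1)) p k" "0 < qpoch p p (be + k)"
      using qp_pos[OF p0 p1, of 0 k] qp_pos[OF p0 p1, of al k] qp_pos[OF p0 p1, of al "be + k"]
        qp_pos[OF p0 p1, of "s" k] qp_pos[OF p0 p1, of 0 "be + k"] by simp_all
    have nz: "1 - p^s \<noteq> 0" "1 - p^(s + k) \<noteq> 0" "1 - p^a1 \<noteq> 0"
      using lt[of s] lt[of "s + k"] lt[of a1] by (auto simp: s_def)
    have sk: "a1 + be + 2 * k = s + k" by (simp add: s_def)
    show "cc * Lf p a1 (PP * Wp p (be + k)) = Ntar"
      unfolding cc top Ntar_def sk
      by (rule alg[OF Pn0 _ _ _ nz(1) _ nz(2) k1 k2]) (use pos in auto)
  qed
  finally show ?thesis .
qed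

end


lemma ncpow_word: "ncpow (ncword [x]) t = ncword (replicate t x)"
  by (induction t) (simp_all add: ncword_nil ncword_append)

definition lamj :: "nat \<Rightarrow> nat \<Rightarrow> nat \<Rightarrow> nat" where
  "lamj n j = (\<lambda>i. if i = n then j else 0)"

lemma zw_word_lamj: "1 \<le> n \<Longrightarrow> zw_word n (lamj n j) (lamj n j) = replicate j (False, n) @ replicate j (True, n)"
proof -
  assume n1: "1 \<le> n"
  have up: "[1..<n+1] = [1..<n] @ [n]" using n1 by simp
  have e0: "concat (map (\<lambda>i. replicate (if i = n then j else 0) (b, i)) [1..<n]) = []" for b
    by (auto simp: concat_eq_Nil_conv)
  have e1: "concat (map (\<lambda>i. replicate (if i = n then j else 0) (b, i)) (rev [1..<n])) = []" for b
    by (auto simp: concat_eq_Nil_conv)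
  show ?thesis unfolding zw_word_def up lamj_def
    by (simp only: map_append concat_append rev_append e0 e1 list.map concat.simps rev.simps append_Nil append_Nil2) simp
qed

lemma hval_lamj: "1 \<le> n \<Longrightarrow> hval q n (lamj n j) = hv (q^2) (n - 1) j"
proof -
  assume n1: "1 \<le> n"
  have s1: "(\<Sum>i\<in>{1..n-1}. (n - i) * lamj n j i) = 0" by (simp add: lamj_def)
  have p1: "(\<Prod>i\<in>{1..n}. qpoch (1 / q^2) (1 / q^2) (lamj n j i)) = qpoch (1 / q^2) (1 / q^2) j"
  proof -
    have "(\<Prod>i\<in>{1..n}. qpoch (1 / q^2) (1 / q^2) (lamj n j i)) = (\<Prod>i\<in>{1..n}. if i = n then qpoch (1 / q^2) (1 / q^2) j else 1)"
      by (intro prod.cong) (auto simp: lamj_def)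
    also have "\<dots> = qpoch (1 / q^2) (1 / q^2) j" using n1 by (simp add: prod.delta)
    finally show ?thesis .
  qed
  have s2: "(\<Sum>i\<in>{1..n}. lamj n j i) + n - 1 = j + (n - 1)"
  proof -
    have "(\<Sum>i\<in>{1..n}. lamj n j i) = (\<Sum>i\<in>{1..n}. if i = n then j else 0)"
      by (intro sum.cong) (auto simp: lamj_def)
    also have "\<dots> = j" using n1 by (simp add: sum.delta)
    finally show ?thesis using n1 by simp
  qed
  show ?thesis unfolding hval_def s1 p1 s2 hv_def by simp
qed

lemma gp_deg: "0 < p \<Longrightarrow> degree (gp p j) = j" and gp_lc: "0 < p \<Longrightarrow> coeff (gp p j) j \<noteq> 0"
proof -
  assume p0: "0 < p"
  have "\<And>i. - ((1/p)^i) \<noteq> 0" using p0 by simp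
  note d = deg_lin_prod[of "\<lambda>i. - ((1/p)^i)" j, OF this]
  show "degree (gp p j) = j" using d(1) by (simp add: gp_def)
  show "coeff (gp p j) j \<noteq> 0" using d(2) p0 by (simp add: gp_def prod_zero_iff)
qed

lemma gp_Wp: "0 < p \<Longrightarrow> pcompose (gp p d) [:0, p^d:] = Wp p d"
proof -
  assume p0: "0 < p"
  have "poly (pcompose (gp p d) [:0, p^d:]) x = poly (Wp p d) x" for x
  proof -
    have "poly (pcompose (gp p d) [:0, p^d:]) x = (\<Prod>i<d. 1 - (1/p)^i * (p^d * x))"
      by (simp add: gp_def poly_pcompose poly_prod mult_ac)
    also have "\<dots> = (\<Prod>i<d. 1 - (1/p)^(d - Suc i) * (p^d * x))"
      by (rule prod.nat_diff_reindex[symmetric])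
    also have "\<dots> = (\<Prod>i<d. 1 - p^Suc i * x)"
    proof (rule prod.cong)
      fix i assume "i \<in> {..<d}"
      then have dd: "d = (d - Suc i) + Suc i" by simp
      have "(1/p)^(d - Suc i) * p^d = p^Suc i"
        using p0 by (subst (2) dd, simp only: power_add) (simp add: power_one_over field_simps)
      then show "1 - (1/p)^(d - Suc i) * (p^d * x) = 1 - p^Suc i * x" by (simp add: mult.assoc[symmetric])
    qed simp
    also have "\<dots> = poly (Wp p d) x" by (simp add: Wp_def poly_prod mult_ac)
    finally show ?thesis .
  qed
  then have "poly (pcompose (gp p d) [:0, p^d:]) = poly (Wp p d)" by (rule ext)
  then show ?thesis by (rule poly_eq_poly_eq_iff[THEN iffD1])
qed

context
  fixes q :: real and n :: nat and h :: "ncp \<Rightarrow> complex"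
  assumes q0: "0 < q" and q1: "q < 1" and n2: "2 \<le> n" and hh: "is_hn q n h"
begin

lemma p0': "0 < q^2" using q0 by simp
lemma p1': "q^2 < 1" using q0 q1 by (simp add: power_less_one_iff)
lemma a0': "0 < n - 1" using n2 by simp

lemma pEvQ: "ncpoly n (ncev F (Qsum (n - 1)))" using pEv[OF n2] .

lemma h_gp: "h (ncev (gp (q^2) j) (Qsum (n - 1))) = of_real (Lf (q^2) (n - 1) (gp (q^2) j))"
proof -
  have c: "ncong q n (ncmul (ncpow (zg n) j) (ncpow (wg n) j)) (ncev (gp (q^2) j) (Qsum (n - 1)))"
    by (rule R8[OF n2 q0])
  have "h (ncev (gp (q^2) j) (Qsum (n - 1))) = h (ncmul (ncpow (zg n) j) (ncpow (wg n) j))"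
    using hn_cong[OF hh ncong_sym[OF c]] pEvQ n2 by (auto intro!: ncpoly_mul ncpoly_pow)
  also have "ncmul (ncpow (zg n) j) (ncpow (wg n) j) = ncword (zw_word n (lamj n j) (lamj n j))"
    using n2 by (simp add: zw_word_lamj zg_def wg_def ncpow_word ncword_append)
  also have "h \<dots> = of_real (hval q n (lamj n j))"
    using hh by (simp add: is_hn_def)
  also have "hval q n (lamj n j) = hv (q^2) (n - 1) j"
    by (rule hval_lamj) (use n2 in simp)
  also have "\<dots> = Lf (q^2) (n - 1) (gp (q^2) j)"
    by (rule Lf_gp[symmetric, OF p0' p1' a0'])
  finally show ?thesis .
qed

lemma h_ncev: "h (ncev F (Qsum (n - 1))) = of_real (Lf (q^2) (n - 1) F)"
proof (rule basis_ind[where b="gp (q^2)" and S="\<lambda>F. h (ncev F (Qsum (n - 1))) = of_real (Lf (q^2) (n - 1) F)" and t="Suc (degree F)"])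
  show "\<And>j. degree (gp (q^2) j) = j" using gp_deg[OF p0'] .
  show "\<And>j. coeff (gp (q^2) j) j \<noteq> 0" using gp_lc[OF p0'] .
  show "h (ncev 0 (Qsum (n - 1))) = of_real (Lf (q^2) (n - 1) 0)" using hn_zero[OF hh] by simp
next
  fix F G c
  assume a: "h (ncev F (Qsum (n - 1))) = of_real (Lf (q^2) (n - 1) F)"
    "h (ncev G (Qsum (n - 1))) = of_real (Lf (q^2) (n - 1) G)"
  have "h (ncev (F + smult c G) (Qsum (n - 1))) = h (ncev F (Qsum (n - 1)) + ncsmult (of_real c) (ncev G (Qsum (n - 1))))"
    by (simp add: ncev_add ncev_smult)
  also have "\<dots> = h (ncev F (Qsum (n - 1))) + of_real c * h (ncev G (Qsum (n - 1)))"
    using pEvQ by (simp add: hn_add[OF hh] hn_smult[OF hh] ncpoly_smult)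
  finally show "h (ncev (F + smult c G) (Qsum (n - 1))) = of_real (Lf (q^2) (n - 1) (F + smult c G))"
    using a by (simp add: Lf_add Lf_smult)
next
  fix j show "h (ncev (gp (q^2) j) (Qsum (n - 1))) = of_real (Lf (q^2) (n - 1) (gp (q^2) j))" by (rule h_gp)
next
  fix i assume "Suc (degree F) \<le> i" then show "coeff F i = 0" by (simp add: coeff_eq_0)
qed

end


theorem proposition3p3p2:
  fixes q :: real and n l m :: nat and h :: "ncp \<Rightarrow> complex"
  assumes "0 < q" and "q < 1" and "2 \<le> n" and "is_hn q n h"
  shows "h (ncmul (ncstar (qdisk n q l m)) (qdisk n q l m)) = of_real (cval (n - 2) q l m)"
proof -
  note q0 = assms(1) and q1 = assms(2) and n2 = assms(3) and hh = assms(4)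
  define p where "p = q^2"
  define al where "al = n - 2"
  have p0: "0 < p" using q0 by (simp add: p_def)
  have p1: "p < 1" using q0 q1 by (simp add: p_def power_less_one_iff)
  have a: "n - 1 = Suc al" using n2 by (simp add: al_def)
  define Q where "Q = Qsum (n - 1)"
  have sQ: "ncstar Q = Q" by (simp add: Q_def ncstar_Qsum)
  have pQ: "ncpoly n (ncev F Q)" for F unfolding Q_def by (rule pEv[OF n2])
  have pz: "ncpoly n (ncpow (zg n) d)" for d using n2 by (intro ncpoly_pow ncpoly_zg) auto
  have pw: "ncpoly n (ncpow (wg n) d)" for d using n2 by (intro ncpoly_pow ncpoly_wg) auto
  have hQ: "h (ncev F Q) = of_real (Lf p (Suc al) F)" for F
    unfolding Q_def p_def a[symmetric] by (rule h_ncev[OF q0 q1 n2 hh])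
  show ?thesis
  proof (cases "m \<le> l")
    case True
    define d where "d = l - m"
    define P where "P = lqpoly (n - 2) d m p"
    have R: "qdisk n q l m = ncmul (ncpow (zg n) d) (ncev P Q)"
      using True by (simp add: qdisk_def d_def P_def p_def Q_def lqJ_ncev)
    have Rs: "ncstar (qdisk n q l m) = ncmul (ncev P Q) (ncpow (wg n) d)"
      unfolding R by (simp add: ncstar_mul ncstar_pow ncstar_ncev sQ)
    have "ncmul (ncstar (qdisk n q l m)) (qdisk n q l m) =
        ncmul (ncev P Q) (ncmul (ncmul (ncpow (wg n) d) (ncpow (zg n) d)) (ncev P Q))"
      unfolding Rs unfolding R by (simp add: ncmul_assoc)
    also have "ncong q n \<dots> (ncmul (ncev P Q) (ncmul (ncev (Wp p d) Q) (ncev P Q)))"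
      unfolding Q_def p_def
      by (intro ncong_lmul ncong_rmul R7[OF n2 q0]) (auto intro: pEv[OF n2] pEv'[OF n2])
    also have "\<dots> = ncev (P * (Wp p d * P)) Q"
      by (simp add: ncev_mult)
    finally have c: "ncong q n (ncmul (ncstar (qdisk n q l m)) (qdisk n q l m)) (ncev (P * (Wp p d * P)) Q)" .
    have "h (ncmul (ncstar (qdisk n q l m)) (qdisk n q l m)) = h (ncev (P * (Wp p d * P)) Q)"
    proof -
      have "ncpoly n (ncmul (ncstar (qdisk n q l m)) (qdisk n q l m))"
        unfolding Rs unfolding R by (intro ncpoly_mul pQ pz pw)
      then show ?thesis by (rule hn_cong[OF hh c _ pQ])
    qed
    also have "\<dots> = of_real (Lf p (Suc al) (P * (P * Wp p d)))"
      by (simp add: hQ mult_ac)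
    also have "Lf p (Suc al) (P * (P * Wp p d)) = Ntar p al d m"
      unfolding P_def al_def[symmetric] by (rule norm[OF p0 p1])
    also have "Ntar p al d m = cval (n - 2) q l m"
    proof -
      have l: "l = d + m" using True by (simp add: d_def)
      have e1: "q^(2 * (al + 1)) = p^Suc al" by (simp only: p_def power_mult Suc_eq_plus1)
      have e2: "q^(2 * m * (al + 1)) = p^(m * Suc al)" by (simp only: p_def power_mult mult.assoc Suc_eq_plus1)
      have "al + l + m + 1 = Suc al + d + 2 * m" by (simp add: l)
      then have e3: "q^(2 * (al + l + m + 1)) = p^(Suc al + d + 2 * m)" by (simp only: p_def power_mult)
      show ?thesis unfolding cval_def al_def[symmetric] e1 e2 e3 Ntar_def[OF p0 p1] p_def[symmetric]
        by (simp add: l add.commute)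
    qed
    finally show ?thesis .
  next
    case False
    define d where "d = m - l"
    define P where "P = lqpoly (n - 2) d l p"
    define G where "G = pcompose (P * P) [:0, (1/p)^d:]"
    have R: "qdisk n q l m = ncmul (ncev P Q) (ncpow (wg n) d)"
      using False by (simp add: qdisk_def d_def P_def p_def Q_def lqJ_ncev)
    have Rs: "ncstar (qdisk n q l m) = ncmul (ncpow (zg n) d) (ncev P Q)"
      unfolding R by (simp add: ncstar_mul ncstar_pow ncstar_ncev sQ)
    have "ncmul (ncstar (qdisk n q l m)) (qdisk n q l m) =
        ncmul (ncmul (ncpow (zg n) d) (ncev (P * P) Q)) (ncpow (wg n) d)"
      unfolding Rs unfolding R by (simp add: ncmul_assoc ncev_mult)
    also have "ncong q n \<dots> (ncmul (ncmul (ncev G Q) (ncpow (zg n) d)) (ncpow (wg n) d))"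
      unfolding Q_def p_def G_def
      by (intro ncong_rmul Zinvd[OF n2 q0]) (auto intro: pw)
    also have "\<dots> = ncmul (ncev G Q) (ncmul (ncpow (zg n) d) (ncpow (wg n) d))"
      by (simp add: ncmul_assoc)
    also have "ncong q n \<dots> (ncmul (ncev G Q) (ncev (gp p d) Q))"
      unfolding Q_def p_def
      by (intro ncong_lmul R8[OF n2 q0]) (auto intro: pEv[OF n2] pEv'[OF n2])
    also have "\<dots> = ncev (G * gp p d) Q"
      by (simp add: ncev_mult)
    finally have c: "ncong q n (ncmul (ncstar (qdisk n q l m)) (qdisk n q l m)) (ncev (G * gp p d) Q)" .
    have "h (ncmul (ncstar (qdisk n q l m)) (qdisk n q l m)) = h (ncev (G * gp p d) Q)"
    proof -
      have "ncpoly n (ncmul (ncstar (qdisk n q l m)) (qdisk n q l m))"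
        unfolding Rs unfolding R by (intro ncpoly_mul pQ pz pw)
      then show ?thesis by (rule hn_cong[OF hh c _ pQ])
    qed
    also have "\<dots> = of_real (Lf p (Suc al) (G * gp p d))"
      by (simp add: hQ)
    also have "Lf p (Suc al) (G * gp p d) = p^(Suc al * d) * Lf p (Suc al) (pcompose (G * gp p d) [:0, p^d:])"
    proof (rule Lf_iter[OF p0 p1])
      show "0 < Suc al" by simp
    next
      fix r assume "r < d"
      have "poly (gp p d) (p^r) = 0"
        unfolding gp_def poly_prod
      proof (rule prod_zero)
        show "\<exists>i\<in>{..<d}. poly [:1, - ((1/p)^i):] (p^r) = 0"
          using \<open>r < d\<close> p0 by (intro bexI[where x=r]) (auto simp: power_one_over)
      qed simp
      then show "poly (G * gp p d) (p^r) = 0" by simp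
    qed
    also have "pcompose (G * gp p d) [:0, p^d:] = P * (P * Wp p d)"
    proof -
      have "pcompose G [:0, p^d:] = P * P"
        unfolding G_def using p0 by (simp add: pcompose_assoc[symmetric] pcomp_lin2 power_one_over)
      then show ?thesis by (simp add: pcompose_mult gp_Wp[OF p0] mult.assoc)
    qed
    also have "Lf p (Suc al) (P * (P * Wp p d)) = Ntar p al d l"
      unfolding P_def al_def[symmetric] by (rule norm[OF p0 p1])
    also have "p^(Suc al * d) * Ntar p al d l = cval (n - 2) q l m"
    proof -
      have mm: "m = l + d" using False by (simp add: d_def)
      have e1: "q^(2 * (al + 1)) = p^Suc al" by (simp only: p_def power_mult Suc_eq_plus1)
      have "2 * m * (al + 1) = 2 * (l * Suc al + Suc al * d)" by (simp add: mm algebra_simps)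
      then have e2: "q^(2 * m * (al + 1)) = p^(l * Suc al) * p^(Suc al * d)"
        by (simp only: p_def power_mult power_add)
      have "al + l + m + 1 = Suc al + d + 2 * l" by (simp add: mm)
      then have e3: "q^(2 * (al + l + m + 1)) = p^(Suc al + d + 2 * l)" by (simp only: p_def power_mult)
      show ?thesis unfolding cval_def al_def[symmetric] e1 e2 e3 Ntar_def[OF p0 p1] p_def[symmetric]
        by (simp add: mm add.commute mult_ac)
    qed
    finally show ?thesis .
  qed
qed


end
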